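(* Let $\mathbf t=(t_1,t_2,t_3)\in\mathbb N^3$, $k=t_1+t_2+t_3+2$, $w\ge k-1$, and let $n>w$. Consider the first (top-level) call to Partition performed by Generalized Yaroslavskiy Quicksort with parameters $\mathbf t,w$ on the input $A[i]=U_i$, $1\le i\le n$, with $U_1,\dots,U_n$ i.i.d. uniform on $(0,1)$. Then the number $T_S$ of swaps performed in this call satisfies $T_S=I_1+l@\mathcal K$, and conditional on $\mathbf I=(I_1,I_2,I_3)$, \[ T_S\overset{d}{=}I_1+X+B, \] where, conditional on $\mathbf I$, $X\sim\mathrm{HypG}(I_1+I_2,I_3,n-k)$ and $B\sim\mathrm{Bernoulli}\bigl(\tfrac{I_3}{n-k}\bigr)$.
   Context: Procedure Partition$(A,\mathit{left},\mathit{right},P,Q)$: set $\ell\gets\mathit{left}$, $g\gets\mathit{right}$, $k\gets\ell$. While $k\le g$: if $A[k]<P$, swap $A[k]$, $A[\ell]$ and $\ell\gets\ell+1$; else, if $A[k]\ge Q$, then (i) while ($A[g]>Q$ and $k<g$) set $g\gets g-1$; (ii) if $A[g]\ge P$, swap $A[k]$, $A[g]$; otherwise swap $A[k]$, $A[g]$, then swap $A[k]$, $A[\ell]$ and $\ell\gets\ell+1$; (iii) $g\gets g-1$. Then $k\gets k+1$. Return $(\ell-1,g+1)$. Swaps are the swap operations. Generalized Yaroslavskiy Quicksort (top-level step on $A[1..n]$, $n>w$): the sample consists of the $t_1+t_2+1$ leftmost and the $t_3+1$ rightmost entries; it is sorted, $P$ is its $(t_1+1)$-st smallest and $Q$ its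 $(t_1+t_2+2)$-nd smallest element; then Partition is called with pivots $P,Q$ on the $n-k$ ordinary (non-sample) elements at positions $t_1+t_2+2,\dots,n-t_3-1$. Notation for this first Partition call: an element $U$ is small if $U<P$, medium if $P<U<Q$, large if $U>Q$. $I_1,I_2,I_3$ are the numbers of small, medium, large ordinary elements. $\mathcal K$ is the set of values of the index $k$ at which the array is accessed as $A[k]$, and $l@\mathcal K$ is the number of positions $i\in\mathcal K$ whose element before partitioning is large. $\mathrm{HypG}(a,r,N)$ denotes the number of red balls obtained when drawing $a$ times without replacement from an urn with $N$ balls of which $r$ are red. *)

theory Defs
  imports "HOL-Probability.Probability"
begin

definition swapA :: "(nat \<Rightarrow> real) \<Rightarrow> nat \<Rightarrow> nat \<Rightarrow> (nat \<Rightarrow> real)" where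
  "swapA A i j = A(i := A j, j := A i)"

fun inner_g :: "(nat \<Rightarrow> real) \<Rightarrow> real \<Rightarrow> nat \<Rightarrow> nat \<Rightarrow> nat" where
  "inner_g A Q k g = (if A g > Q \<and> k < g then inner_g A Q k (g - 1) else g)"
declare inner_g.simps[simp del]

lemma inner_g_le: "inner_g A Q k g \<le> g"
proof (induction A Q k g rule: inner_g.induct)
  case (1 A Q k g)
  show ?case
  proof (cases "A g > Q \<and> k < g")
    case True
    then have "inner_g A Q k g = inner_g A Q k (g - 1)" by (rule trans[OF inner_g.simps if_P])
    then show ?thesis using 1 True by linarith
  next
    case False
    then have "inner_g A Q k g = g" by (rule trans[OF inner_g.simps if_not_P])
    then show ?thesis by simp
  qed
qed

lemma inner_g_ge: "k \<le> g \<Longrightarrow> k \<le> inner_g A Q k g"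
proof (induction A Q k g rule: inner_g.induct)
  case (1 A Q k g)
  show ?case
  proof (cases "A g > Q \<and> k < g")
    case True
    then have "inner_g A Q k g = inner_g A Q k (g - 1)" by (rule trans[OF inner_g.simps if_P])
    then show ?thesis using 1 True by auto
  next
    case False
    then have "inner_g A Q k g = g" by (rule trans[OF inner_g.simps if_not_P])
    then show ?thesis using 1 by simp
  qed
qed

text \<open>State: array A, indices l, g, k, the number of swaps
  performed so far, and the set of values of k at which A[k] was accessed.  The procedure's return
  value (l-1, g+1) can be read off from the second and third components.\<close>
function part_loop :: "real \<Rightarrow> real \<Rightarrow> (nat \<Rightarrow> real) \<Rightarrow> nat \<Rightarrow> nat \<Rightarrow> nat \<Rightarrow> nat \<Rightarrow> nat set
    \<Rightarrow> (nat \<Rightarrow> real) \<times> nat \<times> nat \<times> nat \<times> nat set" where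
  "part_loop P Q A l g k s K =
    (if k \<le> g then
       (if A k < P then part_loop P Q (swapA A k l) (l + 1) g (k + 1) (s + 1) (insert k K)
        else if A k \<ge> Q then
          (let g1 = inner_g A Q k g in
           if A g1 \<ge> P then part_loop P Q (swapA A k g1) l (g1 - 1) (k + 1) (s + 1) (insert k K)
           else part_loop P Q (swapA (swapA A k g1) k l) (l + 1) (g1 - 1) (k + 1) (s + 2) (insert k K))
        else part_loop P Q A l g (k + 1) s (insert k K))
     else (A, l, g, s, K))"
  by pat_completeness auto
termination
proof (relation "Wellfounded.measure (\<lambda>(P, Q, A, l, g, k, s, K). g + 1 - k)", goal_cases)
  case 1 then show ?case by simp
next
  case 2 then show ?case by auto
next
  case (3 P Q A l g k s K x)
  then have "x \<le> g" "k \<le> x" using inner_g_le inner_g_ge by auto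
  then show ?case by auto
next
  case (4 P Q A l g k s K x)
  then have "x \<le> g" "k \<le> x" using inner_g_le inner_g_ge by auto
  then show ?case by auto
next
  case 5 then show ?case by auto
qed

definition yq_sample :: "nat \<Rightarrow> nat \<Rightarrow> nat \<Rightarrow> nat \<Rightarrow> (nat \<Rightarrow> real) \<Rightarrow> real list" where
  "yq_sample t1 t2 t3 n U = map U ([1..<t1 + t2 + 2] @ [n - t3..<n + 1])"

text \<open>P is the (t1+1)-st smallest, Q the (t1+t2+2)-nd smallest sample element.\<close>
definition yq_P :: "nat \<Rightarrow> nat \<Rightarrow> nat \<Rightarrow> nat \<Rightarrow> (nat \<Rightarrow> real) \<Rightarrow> real" where
  "yq_P t1 t2 t3 n U = sort (yq_sample t1 t2 t3 n U) ! t1"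

definition yq_Q :: "nat \<Rightarrow> nat \<Rightarrow> nat \<Rightarrow> nat \<Rightarrow> (nat \<Rightarrow> real) \<Rightarrow> real" where
  "yq_Q t1 t2 t3 n U = sort (yq_sample t1 t2 t3 n U) ! (t1 + t2 + 1)"

text \<open>Positions of the ordinary (non-sample) elements.\<close>
definition yq_ord :: "nat \<Rightarrow> nat \<Rightarrow> nat \<Rightarrow> nat \<Rightarrow> nat set" where
  "yq_ord t1 t2 t3 n = {t1 + t2 + 2 .. n - t3 - 1}"

text \<open>The first call Partition(A, t1+t2+2, n-t3-1, P, Q) on the input array U
  (sorting the sample does not touch the ordinary positions).\<close>
definition yq_first_partition ::
  "nat \<Rightarrow> nat \<Rightarrow> nat \<Rightarrow> nat \<Rightarrow> (nat \<Rightarrow> real) \<Rightarrow> (nat \<Rightarrow> real) \<times> nat \<times> nat \<times> nat \<times> nat set" where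
  "yq_first_partition t1 t2 t3 n U =
     part_loop (yq_P t1 t2 t3 n U) (yq_Q t1 t2 t3 n U) U
       (t1 + t2 + 2) (n - t3 - 1) (t1 + t2 + 2) 0 {}"

definition yq_TS :: "nat \<Rightarrow> nat \<Rightarrow> nat \<Rightarrow> nat \<Rightarrow> (nat \<Rightarrow> real) \<Rightarrow> nat" where
  "yq_TS t1 t2 t3 n U = fst (snd (snd (snd (yq_first_partition t1 t2 t3 n U))))"

definition yq_K :: "nat \<Rightarrow> nat \<Rightarrow> nat \<Rightarrow> nat \<Rightarrow> (nat \<Rightarrow> real) \<Rightarrow> nat set" where
  "yq_K t1 t2 t3 n U = snd (snd (snd (snd (yq_first_partition t1 t2 t3 n U))))"

definition yq_lK :: "nat \<Rightarrow> nat \<Rightarrow> nat \<Rightarrow> nat \<Rightarrow> (nat \<Rightarrow> real) \<Rightarrow> nat" where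
  "yq_lK t1 t2 t3 n U = card {i \<in> yq_K t1 t2 t3 n U. U i > yq_Q t1 t2 t3 n U}"

definition yq_I :: "nat \<Rightarrow> nat \<Rightarrow> nat \<Rightarrow> nat \<Rightarrow> (nat \<Rightarrow> real) \<Rightarrow> nat \<times> nat \<times> nat" where
  "yq_I t1 t2 t3 n U =
    (let P = yq_P t1 t2 t3 n U; Q = yq_Q t1 t2 t3 n U; Ord = yq_ord t1 t2 t3 n in
     (card {i \<in> Ord. U i < P}, card {i \<in> Ord. P < U i \<and> U i < Q}, card {i \<in> Ord. U i > Q}))"

definition unif_input :: "nat \<Rightarrow> (nat \<Rightarrow> real) measure" where
  "unif_input n = PiM {1..n} (\<lambda>_. uniform_measure lborel {0<..<1::real})"

text \<open>HypG(a, r, N): number of red balls when drawing a times without replacement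
  from an urn of N balls (numbered 0..N-1) of which r (those numbered < r) are red.\<close>
definition hypg_pmf :: "nat \<Rightarrow> nat \<Rightarrow> nat \<Rightarrow> nat pmf" where
  "hypg_pmf a r N = map_pmf (\<lambda>S. card (S \<inter> {..<r})) (pmf_of_set {S. S \<subseteq> {..<N} \<and> card S = a})"

end

theory Submission
  imports Defs
begin


declare part_loop.simps[simp del]

lemma inner_g_props:
  assumes "k \<le> g"
  shows "k \<le> inner_g A Q k g \<and> inner_g A Q k g \<le> g \<and>
         (\<forall>j. inner_g A Q k g < j \<and> j \<le> g \<longrightarrow> Q < A j) \<and>
         (A (inner_g A Q k g) \<le> Q \<or> inner_g A Q k g = k)"
  using assms
proof (induction A Q k g rule: inner_g.induct)
  case (1 A Q k g)
  show ?case
  proof (cases "Q < A g \<and> k < g")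
    case True
    hence e: "inner_g A Q k g = inner_g A Q k (g-1)" by (subst inner_g.simps) simp
    have "k \<le> g - 1" using True by arith
    from 1(1)[OF True this] True have IH:
      "k \<le> inner_g A Q k (g-1) \<and> inner_g A Q k (g-1) \<le> g - 1 \<and>
         (\<forall>j. inner_g A Q k (g-1) < j \<and> j \<le> g - 1 \<longrightarrow> Q < A j) \<and>
         (A (inner_g A Q k (g-1)) \<le> Q \<or> inner_g A Q k (g-1) = k)" by blast
    have "\<forall>j. inner_g A Q k (g-1) < j \<and> j \<le> g \<longrightarrow> Q < A j"
    proof (intro allI impI)
      fix j assume "inner_g A Q k (g-1) < j \<and> j \<le> g"
      then show "Q < A j" using IH True by (cases "j = g") auto
    qed
    then show ?thesis unfolding e using IH by auto
  next
    case False
    hence e: "inner_g A Q k g = g" by (rule trans[OF inner_g.simps if_not_P])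
    show ?thesis using False 1(2) unfolding e by auto
  qed
qed

lemma inner_g_cong:
  assumes "\<forall>j. k \<le> j \<and> j \<le> g \<longrightarrow> (Q < A j \<longleftrightarrow> Q' < B j)"
  shows "inner_g A Q k g = inner_g B Q' k g"
  using assms
proof (induction A Q k g rule: inner_g.induct)
  case (1 A Q k g)
  show ?case
  proof (cases "k < g")
    case True
    have c: "(Q < A g) = (Q' < B g)" using 1(2) True by auto
    show ?thesis
    proof (cases "Q < A g")
      case T: True
      have "inner_g A Q k g = inner_g A Q k (g-1)" using T True by (subst inner_g.simps) simp
      moreover have "inner_g B Q' k g = inner_g B Q' k (g-1)" using T True c by (subst inner_g.simps) simp
      moreover have "inner_g A Q k (g-1) = inner_g B Q' k (g-1)"
        using 1(2) by (intro 1(1)[OF conjI[OF T True]]) auto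
      ultimately show ?thesis by simp
    next
      case F: False
      have "inner_g A Q k g = g" using F by (subst inner_g.simps) simp
      moreover have "inner_g B Q' k g = g" using F c by (subst inner_g.simps) simp
      ultimately show ?thesis by simp
    qed
  next
    case False
    have "inner_g A Q k g = g" using False by (subst inner_g.simps) simp
    moreover have "inner_g B Q' k g = g" using False by (subst inner_g.simps) simp
    ultimately show ?thesis by simp
  qed
qed

lemma swapA_card:
  assumes "a \<in> R" "b \<in> R"
  shows "card {j\<in>R. \<Phi> (swapA A a b j)} = card {j\<in>R. \<Phi> (A j)}"
proof -
  have e: "swapA A a b = A \<circ> Transposition.transpose a b"
    by (auto simp: swapA_def Transposition.transpose_def fun_eq_iff)
  have "{j\<in>R. \<Phi> (swapA A a b j)} = Transposition.transpose a b ` {j\<in>R. \<Phi> (A j)}"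
    unfolding e using assms
    by (auto simp: image_iff Transposition.transpose_def split: if_splits)
  then show ?thesis by (simp add: card_image)
qed

lemma card_lessThan_Suc_filter:
  assumes "lo \<le> k"
  shows "card {j\<in>{lo..<Suc k}. p j} = card {j\<in>{lo..<k}. p j} + (if p k then 1 else 0)"
proof -
  have "{j\<in>{lo..<Suc k}. p j} = (if p k then insert k {j\<in>{lo..<k}. p j} else {j\<in>{lo..<k}. p j})"
    using assms by (auto simp: less_Suc_eq)
  then show ?thesis by auto
qed

definition pinv :: "real \<Rightarrow> real \<Rightarrow> (nat \<Rightarrow> real) \<Rightarrow> nat \<Rightarrow> nat \<Rightarrow> (nat \<Rightarrow> real) \<Rightarrow> nat \<Rightarrow> nat \<Rightarrow> nat \<Rightarrow> nat \<Rightarrow> nat set \<Rightarrow> bool" where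
  "pinv P Q A0 lo hi A l g k s K \<longleftrightarrow>
    0 < lo \<and> lo \<le> l \<and> l \<le> k \<and> k \<le> g + 2 \<and> g \<le> hi \<and> lo \<le> g + 1 \<and> K = {lo..<k} \<and>
    (\<forall>j. k \<le> j \<and> j \<le> g \<longrightarrow> A j = A0 j) \<and>
    (\<forall>j. lo \<le> j \<and> j < l \<longrightarrow> A j < P) \<and>
    (\<forall>j. l \<le> j \<and> j < k \<and> j \<le> g \<longrightarrow> A j \<le> Q) \<and>
    (\<forall>j. g < j \<and> j \<le> hi \<longrightarrow> Q \<le> A j) \<and>
    (\<forall>\<Phi>. card {j\<in>{lo..hi}. \<Phi> (A j)} = card {j\<in>{lo..hi}. \<Phi> (A0 j)}) \<and>
    (g < hi \<and> k \<le> g + 1 \<longrightarrow> A0 (Suc g) \<le> Q) \<and>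
    (k = g + 2 \<longrightarrow> Q \<le> A0 (Suc g) \<and> Suc g \<le> hi) \<and>
    s = card {j\<in>{lo..<k}. A0 j < P} + card {j\<in>{lo..<k}. Q \<le> A0 j} + card {j\<in>{g<..hi}. A0 j < P}"

lemma card_greaterThan_shift:
  fixes x g hi :: nat
  assumes "0 < x" "x \<le> g" "g \<le> hi" "\<forall>j. x < j \<and> j \<le> g \<longrightarrow> \<not> p j"
  shows "card {j\<in>{x - 1<..hi}. p j} = card {j\<in>{g<..hi}. p j} + (if p x then 1 else 0)"
proof -
  have "{j\<in>{x - 1<..hi}. p j} = (if p x then insert x {j\<in>{g<..hi}. p j} else {j\<in>{g<..hi}. p j})"
  proof (rule set_eqI)
    fix j
    show "j \<in> {j\<in>{x - 1<..hi}. p j} \<longleftrightarrow> j \<in> (if p x then insert x {j\<in>{g<..hi}. p j} else {j\<in>{g<..hi}. p j})"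
    proof (cases "j = x")
      case True then show ?thesis using assms by auto
    next
      case False
      show ?thesis
      proof (cases "j < x")
        case True then show ?thesis using False assms by auto
      next
        case nl: False
        then have "x < j" using False by simp
        then show ?thesis using assms False by (cases "j \<le> g") auto
      qed
    qed
  qed
  then show ?thesis using assms by auto
qed

lemma swapA_apply: "swapA A a b j = (if j = b then A a else if j = a then A b else A j)"
  by (simp add: swapA_def)

lemma pinv_small:
  assumes inv: "pinv P Q A0 lo hi A l g k s K" and PQ: "P \<le> Q" and kg: "k \<le> g" and sm: "A k < P"
  shows "pinv P Q A0 lo hi (swapA A k l) (l + 1) g (k + 1) (s + 1) (insert k K)"
proof -
  from inv have i0: "0<lo" "lo \<le> l" "l \<le> k" "k \<le> g+2" "g \<le> hi" "lo \<le> g+1" "K = {lo..<k}"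
    and iU: "\<forall>j. k \<le> j \<and> j \<le> g \<longrightarrow> A j = A0 j"
    and iS: "\<forall>j. lo \<le> j \<and> j < l \<longrightarrow> A j < P"
    and iM: "\<forall>j. l \<le> j \<and> j < k \<and> j \<le> g \<longrightarrow> A j \<le> Q"
    and iL: "\<forall>j. g < j \<and> j \<le> hi \<longrightarrow> Q \<le> A j"
    and iP: "\<forall>\<Phi>. card {j\<in>{lo..hi}. \<Phi> (A j)} = card {j\<in>{lo..hi}. \<Phi> (A0 j)}"
    and iG1: "g < hi \<and> k \<le> g + 1 \<longrightarrow> A0 (Suc g) \<le> Q"
    and iG2: "k = g + 2 \<longrightarrow> Q \<le> A0 (Suc g) \<and> Suc g \<le> hi"
    and iSs: "s = card {j\<in>{lo..<k}. A0 j < P} + card {j\<in>{lo..<k}. Q \<le> A0 j} + card {j\<in>{g<..hi}. A0 j < P}"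
    unfolding pinv_def by blast+
  have Ak: "A k = A0 k" using iU kg by auto
  have P': "card {j\<in>{lo..hi}. \<Phi> (swapA A k l j)} = card {j\<in>{lo..hi}. \<Phi> (A0 j)}" for \<Phi>
    using swapA_card[of k "{lo..hi}" l \<Phi> A] iP i0 kg by auto
  have c1: "card {j\<in>{lo..<Suc k}. A0 j < P} = card {j\<in>{lo..<k}. A0 j < P} + 1"
    using card_lessThan_Suc_filter[of lo k] i0 Ak sm by auto
  have c2: "card {j\<in>{lo..<Suc k}. Q \<le> A0 j} = card {j\<in>{lo..<k}. Q \<le> A0 j}"
    using card_lessThan_Suc_filter[of lo k] i0 Ak sm PQ by auto
  show ?thesis unfolding pinv_def
  proof (intro conjI allI impI)
    show "card {j\<in>{lo..hi}. \<Phi> (swapA A k l j)} = card {j\<in>{lo..hi}. \<Phi> (A0 j)}" for \<Phi> by (rule P')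
    show "insert k K = {lo..<k + 1}" using i0 by auto
    show "s + 1 = card {j\<in>{lo..<k + 1}. A0 j < P} + card {j\<in>{lo..<k + 1}. Q \<le> A0 j} + card {j\<in>{g<..hi}. A0 j < P}"
      using iSs c1 c2 by simp
    fix j
    show "k + 1 \<le> j \<and> j \<le> g \<Longrightarrow> swapA A k l j = A0 j" using iU i0 by (auto simp: swapA_apply)
    show "lo \<le> j \<and> j < l + 1 \<Longrightarrow> swapA A k l j < P" using iS sm i0 by (auto simp: swapA_apply)
    show "l + 1 \<le> j \<and> j < k + 1 \<and> j \<le> g \<Longrightarrow> swapA A k l j \<le> Q" using iM i0 by (auto simp: swapA_apply)
    show "g < j \<and> j \<le> hi \<Longrightarrow> Q \<le> swapA A k l j" using iL i0 kg by (auto simp: swapA_apply)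
  qed (use i0 kg iG1 in auto)
qed

lemma pinv_medium:
  assumes inv: "pinv P Q A0 lo hi A l g k s K" and PQ: "P \<le> Q" and kg: "k \<le> g"
    and sm: "\<not> A k < P" and lg: "\<not> Q \<le> A k"
  shows "pinv P Q A0 lo hi A l g (k + 1) s (insert k K)"
proof -
  from inv have i0: "0<lo" "lo \<le> l" "l \<le> k" "k \<le> g+2" "g \<le> hi" "lo \<le> g+1" "K = {lo..<k}"
    and iU: "\<forall>j. k \<le> j \<and> j \<le> g \<longrightarrow> A j = A0 j"
    and iS: "\<forall>j. lo \<le> j \<and> j < l \<longrightarrow> A j < P"
    and iM: "\<forall>j. l \<le> j \<and> j < k \<and> j \<le> g \<longrightarrow> A j \<le> Q"
    and iL: "\<forall>j. g < j \<and> j \<le> hi \<longrightarrow> Q \<le> A j"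
    and iP: "\<forall>\<Phi>. card {j\<in>{lo..hi}. \<Phi> (A j)} = card {j\<in>{lo..hi}. \<Phi> (A0 j)}"
    and iG1: "g < hi \<and> k \<le> g + 1 \<longrightarrow> A0 (Suc g) \<le> Q"
    and iG2: "k = g + 2 \<longrightarrow> Q \<le> A0 (Suc g) \<and> Suc g \<le> hi"
    and iSs: "s = card {j\<in>{lo..<k}. A0 j < P} + card {j\<in>{lo..<k}. Q \<le> A0 j} + card {j\<in>{g<..hi}. A0 j < P}"
    unfolding pinv_def by blast+
  have Ak: "A k = A0 k" using iU kg by auto
  have c1: "card {j\<in>{lo..<Suc k}. A0 j < P} = card {j\<in>{lo..<k}. A0 j < P}"
    using card_lessThan_Suc_filter[of lo k] i0 Ak sm by auto
  have c2: "card {j\<in>{lo..<Suc k}. Q \<le> A0 j} = card {j\<in>{lo..<k}. Q \<le> A0 j}"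
    using card_lessThan_Suc_filter[of lo k] i0 Ak lg by auto
  show ?thesis unfolding pinv_def
  proof (intro conjI allI impI)
    show "card {j\<in>{lo..hi}. \<Phi> (A j)} = card {j\<in>{lo..hi}. \<Phi> (A0 j)}" for \<Phi> using iP by blast
    show "insert k K = {lo..<k + 1}" using i0 by auto
    show "s = card {j\<in>{lo..<k + 1}. A0 j < P} + card {j\<in>{lo..<k + 1}. Q \<le> A0 j} + card {j\<in>{g<..hi}. A0 j < P}"
      using iSs c1 c2 by simp
    fix j
    show "k + 1 \<le> j \<and> j \<le> g \<Longrightarrow> A j = A0 j" using iU by auto
    show "lo \<le> j \<and> j < l \<Longrightarrow> A j < P" using iS by auto
    show "l \<le> j \<and> j < k + 1 \<and> j \<le> g \<Longrightarrow> A j \<le> Q" using iM lg by (cases "j = k") auto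
    show "g < j \<and> j \<le> hi \<Longrightarrow> Q \<le> A j" using iL by auto
  qed (use i0 kg iG1 in auto)
qed

lemma pinv_gswap:
  assumes inv: "pinv P Q A0 lo hi A l g k s K" and PQ: "P \<le> Q" and kg: "k \<le> g"
    and sm: "\<not> A k < P" and lg: "Q \<le> A k" and xd: "x = inner_g A Q k g" and Px: "P \<le> A x"
  shows "pinv P Q A0 lo hi (swapA A k x) l (x - 1) (k + 1) (s + 1) (insert k K)"
proof -
  from inv have i0: "0<lo" "lo \<le> l" "l \<le> k" "k \<le> g+2" "g \<le> hi" "lo \<le> g+1" "K = {lo..<k}"
    and iU: "\<forall>j. k \<le> j \<and> j \<le> g \<longrightarrow> A j = A0 j"
    and iS: "\<forall>j. lo \<le> j \<and> j < l \<longrightarrow> A j < P"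
    and iM: "\<forall>j. l \<le> j \<and> j < k \<and> j \<le> g \<longrightarrow> A j \<le> Q"
    and iL: "\<forall>j. g < j \<and> j \<le> hi \<longrightarrow> Q \<le> A j"
    and iP: "\<forall>\<Phi>. card {j\<in>{lo..hi}. \<Phi> (A j)} = card {j\<in>{lo..hi}. \<Phi> (A0 j)}"
    and iG1: "g < hi \<and> k \<le> g + 1 \<longrightarrow> A0 (Suc g) \<le> Q"
    and iG2: "k = g + 2 \<longrightarrow> Q \<le> A0 (Suc g) \<and> Suc g \<le> hi"
    and iSs: "s = card {j\<in>{lo..<k}. A0 j < P} + card {j\<in>{lo..<k}. Q \<le> A0 j} + card {j\<in>{g<..hi}. A0 j < P}"
    unfolding pinv_def by blast+
  from inner_g_props[OF kg, of A Q] xd have x1: "k \<le> x" "x \<le> g"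
    and x2: "\<forall>j. x < j \<and> j \<le> g \<longrightarrow> Q < A j" and x3: "A x \<le> Q \<or> x = k" by auto
  have Ak: "A k = A0 k" using iU kg by auto
  have Ax: "A x = A0 x" using iU x1 by auto
  have xpos: "0 < x" using x1 i0 by auto
  have v1: "\<And>j. j \<noteq> k \<Longrightarrow> j \<noteq> x \<Longrightarrow> swapA A k x j = A j"
    and v2: "swapA A k x x = A k" and v3: "x \<noteq> k \<Longrightarrow> swapA A k x k = A x"
    by (auto simp: swapA_apply)
  have P': "card {j\<in>{lo..hi}. \<Phi> (swapA A k x j)} = card {j\<in>{lo..hi}. \<Phi> (A0 j)}" for \<Phi>
    using swapA_card[of k "{lo..hi}" x \<Phi> A] iP i0 kg x1 by auto
  have c1: "card {j\<in>{lo..<Suc k}. A0 j < P} = card {j\<in>{lo..<k}. A0 j < P}"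
    using card_lessThan_Suc_filter[of lo k] i0 Ak sm by auto
  have c2: "card {j\<in>{lo..<Suc k}. Q \<le> A0 j} = card {j\<in>{lo..<k}. Q \<le> A0 j} + 1"
    using card_lessThan_Suc_filter[of lo k] i0 Ak lg by auto
  have c3: "card {j\<in>{x - 1<..hi}. A0 j < P} = card {j\<in>{g<..hi}. A0 j < P}"
  proof -
    have "\<forall>j. x < j \<and> j \<le> g \<longrightarrow> \<not> A0 j < P" using x2 iU x1 PQ by force
    from card_greaterThan_shift[OF xpos x1(2) i0(5) this] show ?thesis using Ax Px by simp
  qed
  show ?thesis unfolding pinv_def
  proof (intro conjI allI impI)
    show "card {j\<in>{lo..hi}. \<Phi> (swapA A k x j)} = card {j\<in>{lo..hi}. \<Phi> (A0 j)}" for \<Phi> by (rule P')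
    show "insert k K = {lo..<k + 1}" using i0 by auto
    show "s + 1 = card {j\<in>{lo..<k + 1}. A0 j < P} + card {j\<in>{lo..<k + 1}. Q \<le> A0 j} + card {j\<in>{x - 1<..hi}. A0 j < P}"
      using iSs c1 c2 c3 by simp
    show "x - 1 < hi \<and> k + 1 \<le> x - 1 + 1 \<Longrightarrow> A0 (Suc (x - 1)) \<le> Q"
      using x3 Ax xpos by auto
    show "k + 1 = x - 1 + 2 \<Longrightarrow> Q \<le> A0 (Suc (x - 1))" using xpos Ak lg by auto
    show "k + 1 = x - 1 + 2 \<Longrightarrow> Suc (x - 1) \<le> hi" using xpos x1 i0 by auto
    fix j
    show "k + 1 \<le> j \<and> j \<le> x - 1 \<Longrightarrow> swapA A k x j = A0 j" using iU v1 x1 by auto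
    show "lo \<le> j \<and> j < l \<Longrightarrow> swapA A k x j < P" using iS v1 x1 i0 by auto
    show "l \<le> j \<and> j < k + 1 \<and> j \<le> x - 1 \<Longrightarrow> swapA A k x j \<le> Q"
    proof -
      assume a: "l \<le> j \<and> j < k + 1 \<and> j \<le> x - 1"
      show ?thesis
      proof (cases "j = k")
        case True
        then have "x \<noteq> k" using a xpos by auto
        then show ?thesis using True v3 x3 by auto
      next
        case False
        then show ?thesis using a v1 iM x1 by auto
      qed
    qed
    show "x - 1 < j \<and> j \<le> hi \<Longrightarrow> Q \<le> swapA A k x j"
    proof -
      assume a: "x - 1 < j \<and> j \<le> hi"
      show ?thesis
      proof (cases "j = x")
        case True then show ?thesis using v2 lg by auto
      next
        case False
        then have "x < j" using a xpos by auto
        then show ?thesis using a v1 x2 iL x1 False by (cases "j \<le> g") (auto intro: less_imp_le)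
      qed
    qed
  qed (use i0 kg x1 xpos in auto)
qed

lemma pinv_gswap2:
  assumes inv: "pinv P Q A0 lo hi A l g k s K" and PQ: "P \<le> Q" and kg: "k \<le> g"
    and sm: "\<not> A k < P" and lg: "Q \<le> A k" and xd: "x = inner_g A Q k g" and Px: "\<not> P \<le> A x"
  shows "pinv P Q A0 lo hi (swapA (swapA A k x) k l) (l + 1) (x - 1) (k + 1) (s + 2) (insert k K)"
proof -
  from inv have i0: "0<lo" "lo \<le> l" "l \<le> k" "k \<le> g+2" "g \<le> hi" "lo \<le> g+1" "K = {lo..<k}"
    and iU: "\<forall>j. k \<le> j \<and> j \<le> g \<longrightarrow> A j = A0 j"
    and iS: "\<forall>j. lo \<le> j \<and> j < l \<longrightarrow> A j < P"
    and iM: "\<forall>j. l \<le> j \<and> j < k \<and> j \<le> g \<longrightarrow> A j \<le> Q"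
    and iL: "\<forall>j. g < j \<and> j \<le> hi \<longrightarrow> Q \<le> A j"
    and iP: "\<forall>\<Phi>. card {j\<in>{lo..hi}. \<Phi> (A j)} = card {j\<in>{lo..hi}. \<Phi> (A0 j)}"
    and iG1: "g < hi \<and> k \<le> g + 1 \<longrightarrow> A0 (Suc g) \<le> Q"
    and iG2: "k = g + 2 \<longrightarrow> Q \<le> A0 (Suc g) \<and> Suc g \<le> hi"
    and iSs: "s = card {j\<in>{lo..<k}. A0 j < P} + card {j\<in>{lo..<k}. Q \<le> A0 j} + card {j\<in>{g<..hi}. A0 j < P}"
    unfolding pinv_def by blast+
  from inner_g_props[OF kg, of A Q] xd have x1: "k \<le> x" "x \<le> g"
    and x2: "\<forall>j. x < j \<and> j \<le> g \<longrightarrow> Q < A j" and x3: "A x \<le> Q \<or> x = k" by auto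
  have Ak: "A k = A0 k" using iU kg by auto
  have Ax: "A x = A0 x" using iU x1 by auto
  have xk: "x \<noteq> k" using Px lg PQ by auto
  have xpos: "0 < x" using x1 i0 by auto
  define B where "B = swapA (swapA A k x) k l"
  have v1: "\<And>j. j \<noteq> k \<Longrightarrow> j \<noteq> x \<Longrightarrow> j \<noteq> l \<Longrightarrow> B j = A j"
    and v2: "B x = A k" and v3: "B l = A x" and v4: "l \<noteq> k \<Longrightarrow> B k = A l"
    using xk i0 x1 by (auto simp: swapA_apply B_def)
  have P': "card {j\<in>{lo..hi}. \<Phi> (B j)} = card {j\<in>{lo..hi}. \<Phi> (A0 j)}" for \<Phi>
    using swapA_card[of k "{lo..hi}" l \<Phi> "swapA A k x"] swapA_card[of k "{lo..hi}" x \<Phi> A] iP i0 kg x1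
    by (auto simp: B_def)
  have c1: "card {j\<in>{lo..<Suc k}. A0 j < P} = card {j\<in>{lo..<k}. A0 j < P}"
    using card_lessThan_Suc_filter[of lo k] i0 Ak sm by auto
  have c2: "card {j\<in>{lo..<Suc k}. Q \<le> A0 j} = card {j\<in>{lo..<k}. Q \<le> A0 j} + 1"
    using card_lessThan_Suc_filter[of lo k] i0 Ak lg by auto
  have c3: "card {j\<in>{x - 1<..hi}. A0 j < P} = card {j\<in>{g<..hi}. A0 j < P} + 1"
  proof -
    have "\<forall>j. x < j \<and> j \<le> g \<longrightarrow> \<not> A0 j < P" using x2 iU x1 PQ by force
    from card_greaterThan_shift[OF xpos x1(2) i0(5) this] show ?thesis using Ax Px by simp
  qed
  show ?thesis unfolding pinv_def B_def[symmetric]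
  proof (intro conjI allI impI)
    show "card {j\<in>{lo..hi}. \<Phi> (B j)} = card {j\<in>{lo..hi}. \<Phi> (A0 j)}" for \<Phi> by (rule P')
    show "insert k K = {lo..<k + 1}" using i0 by auto
    show "s + 2 = card {j\<in>{lo..<k + 1}. A0 j < P} + card {j\<in>{lo..<k + 1}. Q \<le> A0 j} + card {j\<in>{x - 1<..hi}. A0 j < P}"
      using iSs c1 c2 c3 by simp
    show "x - 1 < hi \<and> k + 1 \<le> x - 1 + 1 \<Longrightarrow> A0 (Suc (x - 1)) \<le> Q"
      using Px PQ Ax xpos by auto
    show "k + 1 = x - 1 + 2 \<Longrightarrow> Q \<le> A0 (Suc (x - 1))" using xpos xk x1 by auto
    show "k + 1 = x - 1 + 2 \<Longrightarrow> Suc (x - 1) \<le> hi" using xpos xk x1 by auto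
    fix j
    show "k + 1 \<le> j \<and> j \<le> x - 1 \<Longrightarrow> B j = A0 j" using iU v1 x1 i0 by auto
    show "lo \<le> j \<and> j < l + 1 \<Longrightarrow> B j < P"
    proof -
      assume a: "lo \<le> j \<and> j < l + 1"
      show ?thesis
      proof (cases "j = l")
        case True then show ?thesis using v3 Px by auto
      next
        case False then show ?thesis using a v1 iS x1 i0 by auto
      qed
    qed
    show "l + 1 \<le> j \<and> j < k + 1 \<and> j \<le> x - 1 \<Longrightarrow> B j \<le> Q"
    proof -
      assume a: "l + 1 \<le> j \<and> j < k + 1 \<and> j \<le> x - 1"
      show ?thesis
      proof (cases "j = k")
        case True
        then have "l \<noteq> k" "l < k" using a by auto
        then show ?thesis using True v4 iM i0 kg by auto
      next
        case False
        then show ?thesis using a v1 iM x1 by auto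
      qed
    qed
    show "x - 1 < j \<and> j \<le> hi \<Longrightarrow> Q \<le> B j"
    proof -
      assume a: "x - 1 < j \<and> j \<le> hi"
      show ?thesis
      proof (cases "j = x")
        case True then show ?thesis using v2 lg by auto
      next
        case False
        then have "x < j" using a xpos by auto
        then show ?thesis using a v1 x2 iL x1 False i0 by (cases "j \<le> g") (auto intro: less_imp_le)
      qed
    qed
  qed (use i0 kg x1 xpos xk in auto)
qed

lemma pinv_final:
  "pinv P Q A0 lo hi A l g k s K \<Longrightarrow> P \<le> Q \<Longrightarrow>
   (case part_loop P Q A l g k s K of (A', l', g', s', K') \<Rightarrow>
      \<exists>k'. g' < k' \<and> pinv P Q A0 lo hi A' l' g' k' s' K')"
proof (induction P Q A l g k s K rule: part_loop.induct)
  case (1 P Q A l g k s K)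
  show ?case
  proof (cases "k \<le> g")
    case False
    have "part_loop P Q A l g k s K = (A, l, g, s, K)"
      using False by (simp add: part_loop.simps[of P Q A l g k s K])
    then show ?thesis using 1(5) False by (auto intro!: exI[of _ k])
  next
    case kg: True
    show ?thesis
    proof (cases "A k < P")
      case sm: True
      have "part_loop P Q A l g k s K = part_loop P Q (swapA A k l) (l + 1) g (k + 1) (s + 1) (insert k K)"
        using kg sm by (simp add: part_loop.simps[of P Q A l g k s K])
      then show ?thesis using 1(1)[OF kg sm pinv_small[OF 1(5) 1(6) kg sm] 1(6)] by simp
    next
      case sm: False
      show ?thesis
      proof (cases "Q \<le> A k")
        case lg: True
        define x where "x = inner_g A Q k g"
        show ?thesis
        proof (cases "P \<le> A x")
          case Px: True
          have "part_loop P Q A l g k s K = part_loop P Q (swapA A k x) l (x - 1) (k + 1) (s + 1) (insert k K)"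
            using kg sm lg Px by (simp add: part_loop.simps[of P Q A l g k s K] x_def Let_def)
          then show ?thesis
            using 1(2)[OF kg sm lg x_def Px pinv_gswap[OF 1(5) 1(6) kg sm lg x_def Px] 1(6)] by simp
        next
          case Px: False
          have "part_loop P Q A l g k s K = part_loop P Q (swapA (swapA A k x) k l) (l + 1) (x - 1) (k + 1) (s + 2) (insert k K)"
            using kg sm lg Px by (simp add: part_loop.simps[of P Q A l g k s K] x_def Let_def)
          then show ?thesis
            using 1(3)[OF kg sm lg x_def Px pinv_gswap2[OF 1(5) 1(6) kg sm lg x_def Px] 1(6)] by simp
        qed
      next
        case lg: False
        have "part_loop P Q A l g k s K = part_loop P Q A l g (k + 1) s (insert k K)"
          using kg sm lg by (simp add: part_loop.simps[of P Q A l g k s K])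
        then show ?thesis using 1(4)[OF kg sm lg pinv_medium[OF 1(5) 1(6) kg sm lg] 1(6)] by simp
      qed
    qed
  qed
qed

lemma part_main:
  assumes lo0: "0 < lo" and lohi: "lo \<le> hi + 1" and PQ: "P \<le> Q" and noQ0: "\<forall>j\<in>{lo..hi}. A0 j \<noteq> Q"
  defines "r \<equiv> card {j\<in>{lo..hi}. Q < A0 j}"
  defines "c \<equiv> hi + 1 - r"
  shows "snd (snd (snd (snd (part_loop P Q A0 lo hi lo 0 {})))) = {lo..< c + (if c \<le> hi \<and> Q < A0 c then 1 else 0)}
     \<and> fst (snd (snd (snd (part_loop P Q A0 lo hi lo 0 {})))) =
        card {j\<in>{lo..hi}. A0 j < P} + card {j\<in>snd (snd (snd (snd (part_loop P Q A0 lo hi lo 0 {})))). Q < A0 j}"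
proof -
  have init: "pinv P Q A0 lo hi A0 lo hi lo 0 {}"
    unfolding pinv_def using lo0 lohi by auto
  obtain A' l' g' s' K' where e: "part_loop P Q A0 lo hi lo 0 {} = (A', l', g', s', K')"
    by (metis prod.exhaust)
  from pinv_final[OF init PQ] e obtain k' where gk: "g' < k'" and inv: "pinv P Q A0 lo hi A' l' g' k' s' K'"
    by auto
  from inv have i0: "0<lo" "lo \<le> l'" "l' \<le> k'" "k' \<le> g'+2" "g' \<le> hi" "lo \<le> g'+1" "K' = {lo..<k'}"
    and iS: "\<forall>j. lo \<le> j \<and> j < l' \<longrightarrow> A' j < P"
    and iM: "\<forall>j. l' \<le> j \<and> j < k' \<and> j \<le> g' \<longrightarrow> A' j \<le> Q"
    and iL: "\<forall>j. g' < j \<and> j \<le> hi \<longrightarrow> Q \<le> A' j"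
    and iP: "\<forall>\<Phi>. card {j\<in>{lo..hi}. \<Phi> (A' j)} = card {j\<in>{lo..hi}. \<Phi> (A0 j)}"
    and iG1: "g' < hi \<and> k' \<le> g' + 1 \<longrightarrow> A0 (Suc g') \<le> Q"
    and iG2: "k' = g' + 2 \<longrightarrow> Q \<le> A0 (Suc g') \<and> Suc g' \<le> hi"
    and iSs: "s' = card {j\<in>{lo..<k'}. A0 j < P} + card {j\<in>{lo..<k'}. Q \<le> A0 j} + card {j\<in>{g'<..hi}. A0 j < P}"
    unfolding pinv_def by blast+
  have "card {j\<in>{lo..hi}. A' j = Q} = card {j\<in>{lo..hi}. A0 j = Q}" using spec[OF iP, of "\<lambda>v. v = Q"] by simp
  also have "{j\<in>{lo..hi}. A0 j = Q} = {}" using noQ0 by auto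
  finally have noQ: "\<forall>j\<in>{lo..hi}. A' j \<noteq> Q" by auto
  have LL: "{j\<in>{lo..hi}. Q < A' j} = {g'<..hi}"
  proof (intro equalityI subsetI)
    fix j assume j: "j \<in> {j\<in>{lo..hi}. Q < A' j}"
    show "j \<in> {g'<..hi}"
    proof (rule ccontr)
      assume "j \<notin> {g'<..hi}"
      then have "j \<le> g'" using j by auto
      have jj: "lo \<le> j" "Q < A' j" using j by auto
      show False
      proof (cases "j < l'")
        case True then have "A' j < P" using iS jj by auto
        then show False using PQ jj by auto
      next
        case False then have "A' j \<le> Q" using iM \<open>j \<le> g'\<close> gk by auto
        then show False using jj by auto
      qed
    qed
  next
    fix j assume j: "j \<in> {g'<..hi}"
    then have "lo \<le> j" using i0 by auto
    then show "j \<in> {j\<in>{lo..hi}. Q < A' j}" using j iL noQ by force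
  qed
  have "r = card {j\<in>{lo..hi}. Q < A' j}" unfolding r_def using spec[OF iP, of "\<lambda>v. Q < v"] by simp
  then have rr: "r = hi - g'" using LL by simp
  have cc: "c = Suc g'" unfolding c_def rr using i0 by simp
  have K'R: "{lo..<k'} \<subseteq> {lo..hi}" using i0 iG2 gk by (cases "k' = g' + 2") auto
  have Kpart: "K' = {lo..< c + (if c \<le> hi \<and> Q < A0 c then 1 else 0)}"
  proof (cases "k' = g' + 2")
    case True
    with iG2 have "Q \<le> A0 (Suc g')" "Suc g' \<le> hi" by auto
    moreover have "A0 (Suc g') \<noteq> Q" using noQ0 i0 \<open>Suc g' \<le> hi\<close> by auto
    ultimately have "c \<le> hi \<and> Q < A0 c" using cc by auto
    then show ?thesis using True i0 cc by simp
  next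
    case False
    then have k1: "k' = g' + 1" using gk i0 by auto
    have nc: "\<not> (c \<le> hi \<and> Q < A0 c)" using iG1 k1 cc by auto
    have z: "(if c \<le> hi \<and> Q < A0 c then 1 else 0) = (0::nat)" using nc by (rule if_not_P)
    show ?thesis unfolding z using k1 i0 cc by simp
  qed
  have sQ: "card {j\<in>{lo..<k'}. Q \<le> A0 j} = card {j\<in>K'. Q < A0 j}"
  proof -
    have "{j\<in>{lo..<k'}. Q \<le> A0 j} = {j\<in>K'. Q < A0 j}" using K'R noQ0 i0 by force
    then show ?thesis by simp
  qed
  have sP: "card {j\<in>{lo..<k'}. A0 j < P} + card {j\<in>{g'<..hi}. A0 j < P} = card {j\<in>{lo..hi}. A0 j < P}"
  proof -
    have d: "{j\<in>{lo..<k'}. A0 j < P} \<inter> {j\<in>{g'<..hi}. A0 j < P} = {}"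
    proof (rule ccontr)
      assume "{j\<in>{lo..<k'}. A0 j < P} \<inter> {j\<in>{g'<..hi}. A0 j < P} \<noteq> {}"
      then obtain j where j: "j < k'" "g' < j" "A0 j < P" by auto
      then have kk: "k' = g' + 2" and jg: "j = Suc g'" using i0 by auto
      from iG2 kk have "Q \<le> A0 (Suc g')" by auto
      with j(3) jg PQ show False by simp
    qed
    have u: "{j\<in>{lo..<k'}. A0 j < P} \<union> {j\<in>{g'<..hi}. A0 j < P} = {j\<in>{lo..hi}. A0 j < P}"
      using K'R gk i0 by auto
    show ?thesis using card_Un_disjoint[of "{j\<in>{lo..<k'}. A0 j < P}" "{j\<in>{g'<..hi}. A0 j < P}"] d u by simp
  qed
  show ?thesis using e Kpart iSs sQ sP by simp
qed




lemma part_loop_cong: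
  assumes "\<forall>j. lo \<le> j \<and> j \<le> hi \<longrightarrow> (A j < P \<longleftrightarrow> B j < P') \<and> (Q \<le> A j \<longleftrightarrow> Q' \<le> B j) \<and> (Q < A j \<longleftrightarrow> Q' < B j)"
    and "lo \<le> l" "l \<le> k" "g \<le> hi"
  shows "snd (part_loop P Q A l g k s K) = snd (part_loop P' Q' B l g k s K)"
  using assms
proof (induction P Q A l g k s K arbitrary: B rule: part_loop.induct)
  case (1 P Q A l g k s K)
  note ag = 1(5)
  show ?case
  proof (cases "k \<le> g")
    case False
    then show ?thesis
      by (simp add: part_loop.simps[of P Q A l g k s K] part_loop.simps[of P' Q' B l g k s K])
  next
    case kg: True
    have ck: "(A k < P \<longleftrightarrow> B k < P') \<and> (Q \<le> A k \<longleftrightarrow> Q' \<le> B k)" using ag kg 1 by auto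
    have sw: "\<forall>j. lo \<le> j \<and> j \<le> hi \<longrightarrow> (swapA A a b j < P \<longleftrightarrow> swapA B a b j < P') \<and> (Q \<le> swapA A a b j \<longleftrightarrow> Q' \<le> swapA B a b j) \<and> (Q < swapA A a b j \<longleftrightarrow> Q' < swapA B a b j)"
      if "lo \<le> a" "a \<le> hi" "lo \<le> b" "b \<le> hi"
      "\<forall>j. lo \<le> j \<and> j \<le> hi \<longrightarrow> (A j < P \<longleftrightarrow> B j < P') \<and> (Q \<le> A j \<longleftrightarrow> Q' \<le> B j) \<and> (Q < A j \<longleftrightarrow> Q' < B j)"
      for a b A B using that by (auto simp: swapA_apply)
    show ?thesis
    proof (cases "A k < P")
      case sm: True
      then have smB: "B k < P'" using ck by simp
      have "snd (part_loop P Q (swapA A k l) (l + 1) g (k + 1) (s + 1) (insert k K)) =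
            snd (part_loop P' Q' (swapA B k l) (l + 1) g (k + 1) (s + 1) (insert k K))"
        using 1 kg by (intro 1(1)[OF kg sm] sw[OF _ _ _ _ ag]) auto
      then show ?thesis using kg sm smB
        by (simp add: part_loop.simps[of P Q A l g k s K] part_loop.simps[of P' Q' B l g k s K])
    next
      case sm: False
      then have smB: "\<not> B k < P'" using ck by simp
      show ?thesis
      proof (cases "Q \<le> A k")
        case lg: True
        then have lgB: "Q' \<le> B k" using ck by simp
        define x where "x = inner_g A Q k g"
        have xB: "x = inner_g B Q' k g" unfolding x_def
          using ag 1 by (intro inner_g_cong) auto
        from inner_g_props[OF kg, of A Q] have x1: "k \<le> x" "x \<le> g" by (auto simp: x_def)
        have cx: "(P \<le> A x) = (P' \<le> B x)" using ag x1 1 by (auto simp: not_less[symmetric])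
        show ?thesis
        proof (cases "P \<le> A x")
          case Px: True
          have "snd (part_loop P Q (swapA A k x) l (x - 1) (k + 1) (s + 1) (insert k K)) =
                snd (part_loop P' Q' (swapA B k x) l (x - 1) (k + 1) (s + 1) (insert k K))"
            using 1 kg x1 by (intro 1(2)[OF kg sm lg x_def Px] sw[OF _ _ _ _ ag]) auto
          then show ?thesis using kg sm smB lg lgB Px cx
            by (simp add: part_loop.simps[of P Q A l g k s K] part_loop.simps[of P' Q' B l g k s K]
                  Let_def x_def[symmetric] xB[symmetric])
        next
          case Px: False
          have "snd (part_loop P Q (swapA (swapA A k x) k l) (l + 1) (x - 1) (k + 1) (s + 2) (insert k K)) =
                snd (part_loop P' Q' (swapA (swapA B k x) k l) (l + 1) (x - 1) (k + 1) (s + 2) (insert k K))"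
            using 1 kg x1 by (intro 1(3)[OF kg sm lg x_def Px] sw[OF _ _ _ _ sw[OF _ _ _ _ ag]]) auto
          then show ?thesis using kg sm smB lg lgB Px cx
            by (simp add: part_loop.simps[of P Q A l g k s K] part_loop.simps[of P' Q' B l g k s K]
                  Let_def x_def[symmetric] xB[symmetric])
        qed
      next
        case lg: False
        then have lgB: "\<not> Q' \<le> B k" using ck by simp
        have "snd (part_loop P Q A l g (k + 1) s (insert k K)) = snd (part_loop P' Q' B l g (k + 1) s (insert k K))"
          using 1 kg by (intro 1(4)[OF kg sm lg]) auto
        then show ?thesis using kg sm smB lg lgB
          by (simp add: part_loop.simps[of P Q A l g k s K] part_loop.simps[of P' Q' B l g k s K])
      qed
    qed
  qed
qed

lemma length_filter_mono_pred:
  assumes "\<forall>x\<in>set xs. p x \<longrightarrow> q x"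
  shows "length (filter p xs) \<le> length (filter q xs)"
  using assms by (induction xs) auto

lemma sort_nth_char:
  fixes xs :: "real list"
  assumes "t < length xs"
  shows "length (filter (\<lambda>y. y < sort xs ! t) xs) \<le> t \<and> t < length (filter (\<lambda>y. y \<le> sort xs ! t) xs)"
proof -
  define s where "s = sort xs"
  have so: "sorted s" and ls: "length s = length xs" by (simp_all add: s_def)
  have lf: "length (filter p xs) = length (filter p s)" for p
  proof -
    have "filter p (sort xs) = sort (filter p xs)" by (rule filter_sort)
    then show ?thesis unfolding s_def by (metis length_sort)
  qed
  have "length (filter (\<lambda>y. y < s ! t) s) = card {i. i < length s \<and> s ! i < s ! t}"
    by (simp add: length_filter_conv_card)
  also have "\<dots> \<le> card {..<t}"
  proof (rule card_mono)
    show "{i. i < length s \<and> s ! i < s ! t} \<subseteq> {..<t}"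
    proof
      fix i assume i: "i \<in> {i. i < length s \<and> s ! i < s ! t}"
      show "i \<in> {..<t}"
      proof (rule ccontr)
        assume "i \<notin> {..<t}"
        then have "t \<le> i" by simp
        then have "s ! t \<le> s ! i" using sorted_nth_mono[OF so] i by auto
        then show False using i by auto
      qed
    qed
  qed simp
  finally have 1: "length (filter (\<lambda>y. y < s ! t) s) \<le> t" by simp
  have "card {..<Suc t} \<le> card {i. i < length s \<and> s ! i \<le> s ! t}"
  proof (rule card_mono)
    show "{..<Suc t} \<subseteq> {i. i < length s \<and> s ! i \<le> s ! t}"
      using sorted_nth_mono[OF so] assms ls by auto
  qed simp
  also have "\<dots> = length (filter (\<lambda>y. y \<le> s ! t) s)"
    by (simp add: length_filter_conv_card)
  finally have 2: "t < length (filter (\<lambda>y. y \<le> s ! t) s)" by simp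
  show ?thesis using 1 2 lf unfolding s_def by simp
qed

lemma sort_nth_unique:
  fixes xs :: "real list"
  assumes "length (filter (\<lambda>z. z < y) xs) \<le> t" "t < length (filter (\<lambda>z. z \<le> y) xs)" "t < length xs"
  shows "sort xs ! t = y"
proof -
  define x where "x = sort xs ! t"
  from sort_nth_char[OF assms(3)] have c: "length (filter (\<lambda>z. z < x) xs) \<le> t" "t < length (filter (\<lambda>z. z \<le> x) xs)"
    unfolding x_def by auto
  have "\<not> x < y"
  proof
    assume "x < y"
    then have "length (filter (\<lambda>z. z \<le> x) xs) \<le> length (filter (\<lambda>z. z < y) xs)"
      by (intro length_filter_mono_pred) auto
    then show False using c assms by linarith
  qed
  moreover have "\<not> y < x"
  proof
    assume "y < x"
    then have "length (filter (\<lambda>z. z \<le> y) xs) \<le> length (filter (\<lambda>z. z < x) xs)"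
      by (intro length_filter_mono_pred) auto
    then show False using c assms by linarith
  qed
  ultimately show ?thesis unfolding x_def by simp
qed

lemma sort_nth_transfer:
  fixes U V :: "nat \<Rightarrow> real"
  assumes eq: "\<forall>i\<in>set idx. \<forall>j\<in>set idx. (U i \<le> U j \<longleftrightarrow> V i \<le> V j)" and t: "t < length idx"
  shows "\<exists>j0\<in>set idx. sort (map U idx) ! t = U j0 \<and> sort (map V idx) ! t = V j0"
proof -
  define x where "x = sort (map U idx) ! t"
  have "x \<in> set (map U idx)" unfolding x_def using t by (metis length_map length_sort nth_mem set_sort)
  then obtain j0 where j0: "j0 \<in> set idx" "x = U j0" by auto
  from sort_nth_char[of t "map U idx"] t have c: "length (filter (\<lambda>z. z < x) (map U idx)) \<le> t"
    "t < length (filter (\<lambda>z. z \<le> x) (map U idx))" unfolding x_def by auto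
  have f1: "length (filter (\<lambda>z. z < V j0) (map V idx)) = length (filter (\<lambda>z. z < x) (map U idx))"
  proof -
    have "filter (\<lambda>i. V i < V j0) idx = filter (\<lambda>i. U i < U j0) idx"
      using eq j0 by (intro filter_cong) (auto simp: not_le[symmetric])
    then show ?thesis using j0 by (simp add: filter_map comp_def)
  qed
  have f2: "length (filter (\<lambda>z. z \<le> V j0) (map V idx)) = length (filter (\<lambda>z. z \<le> x) (map U idx))"
  proof -
    have "filter (\<lambda>i. V i \<le> V j0) idx = filter (\<lambda>i. U i \<le> U j0) idx"
      using eq j0 by (intro filter_cong) auto
    then show ?thesis using j0 by (simp add: filter_map comp_def)
  qed
  have "sort (map V idx) ! t = V j0"
    using c f1 f2 t by (intro sort_nth_unique) auto
  then show ?thesis using j0 x_def by auto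
qed




definition cmpeq :: "nat \<Rightarrow> (nat \<Rightarrow> real) \<Rightarrow> (nat \<Rightarrow> real) \<Rightarrow> bool" where
  "cmpeq n U V \<longleftrightarrow> (\<forall>i\<in>{1..n}. \<forall>j\<in>{1..n}. (U i \<le> U j \<longleftrightarrow> V i \<le> V j))"

lemma space_unif: "space (unif_input n) = PiE {1..n} (\<lambda>_. UNIV)"
  by (simp add: unif_input_def space_PiM)

lemma comp_meas:
  assumes "a \<in> {1..n}"
  shows "(\<lambda>V. V a) \<in> borel_measurable (unif_input n)"
proof -
  have m1: "(\<lambda>V. V a) \<in> measurable (PiM {1..n} (\<lambda>_. uniform_measure lborel {0<..<1::real})) (uniform_measure lborel {0<..<1::real})"
    using assms by (intro measurable_component_singleton) auto
  have m2: "(\<lambda>x. x) \<in> measurable (uniform_measure lborel {0<..<1::real}) borel"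
    by (rule measurable_ident_sets) simp
  from measurable_compose[OF m1 m2] show ?thesis unfolding unif_input_def by simp
qed

lemma cmp_class_meas:
  "{V \<in> space (unif_input n). \<forall>p\<in>{1..n}\<times>{1..n}. (p \<in> R) = (V (fst p) \<le> V (snd p))} \<in> sets (unif_input n)"
proof -
  have "Measurable.pred (unif_input n) (\<lambda>V. \<forall>p\<in>{1..n}\<times>{1..n}. (p \<in> R) = (V (fst p) \<le> V (snd p)))"
  proof (rule pred_intros_finite)
    fix p assume p: "p \<in> {1..n}\<times>{1..n}"
    have p1: "fst p \<in> {1..n}" "snd p \<in> {1..n}" using p by auto
    have le: "Measurable.pred (unif_input n) (\<lambda>V. V (fst p) \<le> V (snd p))"
      unfolding pred_def by (rule borel_measurable_le[OF comp_meas[OF p1(1)] comp_meas[OF p1(2)]])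
    show "Measurable.pred (unif_input n) (\<lambda>V. (p \<in> R) = (V (fst p) \<le> V (snd p)))"
    proof (cases "p \<in> R")
      case True then show ?thesis using le by simp
    next
      case False then show ?thesis using le by (simp add: pred_intros_logic(1))
    qed
  qed simp
  then show ?thesis by (simp add: pred_def)
qed

lemma cmp_measurable:
  assumes inv: "\<And>U V. U \<in> space (unif_input n) \<Longrightarrow> V \<in> space (unif_input n) \<Longrightarrow> cmpeq n U V \<Longrightarrow> F U = F V"
  shows "{U \<in> space (unif_input n). F U \<in> S} \<in> sets (unif_input n)"
proof -
  define M where "M = unif_input n"
  define cmp where "cmp U = {p \<in> {1..n}\<times>{1..n}. U (fst p) \<le> U (snd p)}" for U :: "nat \<Rightarrow> real"
  define X where "X = {U \<in> space M. F U \<in> S}"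
  define C where "C R = {V \<in> space M. \<forall>p\<in>{1..n}\<times>{1..n}. (p \<in> R) = (V (fst p) \<le> V (snd p))}" for R
  have CC: "V \<in> C R \<longleftrightarrow> V \<in> space M \<and> cmp V = R" if "R \<subseteq> {1..n}\<times>{1..n}" for V R
    using that unfolding C_def cmp_def by auto
  have "X = (\<Union>R\<in>cmp ` X. C R)"
  proof (intro equalityI subsetI)
    fix U assume U: "U \<in> X"
    then have "U \<in> C (cmp U)" using CC[of "cmp U" U] by (auto simp: X_def cmp_def)
    then show "U \<in> (\<Union>R\<in>cmp ` X. C R)" using U by auto
  next
    fix V assume "V \<in> (\<Union>R\<in>cmp ` X. C R)"
    then obtain U where U: "U \<in> X" and V: "V \<in> C (cmp U)" by auto
    then have V': "V \<in> space M" "cmp V = cmp U" using CC[of "cmp U" V] by (auto simp: cmp_def)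
    have "cmpeq n U V" unfolding cmpeq_def
    proof (intro ballI)
      fix i j assume ij: "i \<in> {1..n}" "j \<in> {1..n}"
      have "(i, j) \<in> cmp U \<longleftrightarrow> (i, j) \<in> cmp V" using V' by simp
      then show "(U i \<le> U j) = (V i \<le> V j)" using ij by (auto simp: cmp_def)
    qed
    then have "F U = F V" using inv U V' by (auto simp: X_def M_def)
    then show "V \<in> X" using U V' by (auto simp: X_def)
  qed
  moreover have "finite (cmp ` X)"
    by (rule finite_subset[of _ "Pow ({1..n}\<times>{1..n})"]) (auto simp: cmp_def)
  moreover have "C R \<in> sets M" for R unfolding C_def M_def by (rule cmp_class_meas)
  ultimately have "X \<in> sets M" by (metis sets.finite_UN)
  then show ?thesis by (simp add: X_def M_def)
qed




abbreviation "unifM \<equiv> uniform_measure lborel {0<..<1::real}"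

lemma prob_unifM: "prob_space unifM"
  by (rule prob_space_uniform_measure) auto

lemma sets_unifM: "sets unifM = sets borel" by simp

lemma unifM_point: "emeasure unifM {x} = 0"
proof -
  have "emeasure lborel ({x} \<inter> {0<..<1::real}) \<le> emeasure lborel {x}" by (rule emeasure_mono) auto
  then have z: "emeasure lborel ({x} \<inter> {0<..<1::real}) = 0" by simp
  have "emeasure unifM {x} = emeasure lborel ({0<..<1} \<inter> {x}) / emeasure lborel {0<..<1::real}"
    by (rule emeasure_uniform_measure) simp_all
  then show ?thesis using z by (simp add: Int_commute)
qed

lemma pair_distr:
  assumes ij: "i \<in> {1..n}" "j \<in> {1..n}" "i \<noteq> j"
  shows "distr (unif_input n) (unifM \<Otimes>\<^sub>M unifM) (\<lambda>\<omega>. (\<omega> i, \<omega> j)) = unifM \<Otimes>\<^sub>M unifM"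
proof -
  define f where "f b = (if b then i else j)" for b :: bool
  have inj: "inj_on f UNIV" using ij by (auto simp: f_def inj_on_def split: if_splits)
  have fin: "f \<in> UNIV \<rightarrow> {1..n}" using ij by (auto simp: f_def)
  have d1: "distr (unif_input n) (PiM UNIV (\<lambda>b::bool. unifM)) (\<lambda>\<omega>. \<lambda>b\<in>UNIV. \<omega> (f b)) = PiM UNIV (\<lambda>b::bool. unifM)"
    unfolding unif_input_def using distr_PiM_reindex[of "{1..n}" "\<lambda>_. unifM" f UNIV] prob_unifM inj fin by simp
  have cb: "case_bool unifM unifM = (\<lambda>_. unifM)" by (rule ext) (simp split: bool.split)
  have d2: "unifM \<Otimes>\<^sub>M unifM = distr (PiM UNIV (\<lambda>b::bool. unifM)) (unifM \<Otimes>\<^sub>M unifM) (\<lambda>x. (x True, x False))"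
    using pair_measure_eq_distr_PiM[of unifM unifM] prob_unifM unfolding cb
    by (simp add: prob_space_imp_sigma_finite)
  have m1: "(\<lambda>\<omega>. \<lambda>b\<in>UNIV. \<omega> (f b)) \<in> measurable (unif_input n) (PiM UNIV (\<lambda>b::bool. unifM))"
    unfolding unif_input_def
    by (rule measurable_restrict) (use fin in \<open>auto intro!: measurable_component_singleton\<close>)
  have m2: "(\<lambda>x. (x True, x False)) \<in> measurable (PiM UNIV (\<lambda>b::bool. unifM)) (unifM \<Otimes>\<^sub>M unifM)"
    by (intro measurable_Pair measurable_component_singleton) auto
  have "distr (unif_input n) (unifM \<Otimes>\<^sub>M unifM) (\<lambda>\<omega>. (\<omega> i, \<omega> j)) =
        distr (unif_input n) (unifM \<Otimes>\<^sub>M unifM) ((\<lambda>x. (x True, x False)) \<circ> (\<lambda>\<omega>. \<lambda>b\<in>UNIV. \<omega> (f b)))"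
    by (simp add: comp_def f_def)
  also have "\<dots> = distr (distr (unif_input n) (PiM UNIV (\<lambda>b::bool. unifM)) (\<lambda>\<omega>. \<lambda>b\<in>UNIV. \<omega> (f b))) (unifM \<Otimes>\<^sub>M unifM) (\<lambda>x. (x True, x False))"
    by (rule distr_distr[OF m2 m1, symmetric])
  also have "\<dots> = unifM \<Otimes>\<^sub>M unifM" unfolding d1 using d2 by simp
  finally show ?thesis .
qed

lemma diag_null: "{p. fst p = snd p} \<in> null_sets (unifM \<Otimes>\<^sub>M unifM)"
proof -
  interpret p: prob_space unifM by (rule prob_unifM)
  have fm: "fst \<in> borel_measurable (unifM \<Otimes>\<^sub>M unifM)"
    using measurable_compose[OF measurable_fst measurable_ident_sets[OF sets_unifM]] by simp
  have sm: "snd \<in> borel_measurable (unifM \<Otimes>\<^sub>M unifM)"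
    using measurable_compose[OF measurable_snd measurable_ident_sets[OF sets_unifM]] by simp
  have D: "{p. fst p = snd p} \<in> sets (unifM \<Otimes>\<^sub>M unifM)"
    using borel_measurable_eq[OF fm sm] by (simp add: space_pair_measure)
  have "emeasure (unifM \<Otimes>\<^sub>M unifM) {p. fst p = snd p} = (\<integral>\<^sup>+ x. emeasure unifM (Pair x -` {p. fst p = snd p}) \<partial>unifM)"
    by (rule p.emeasure_pair_measure_alt[OF D])
  also have "\<dots> = (\<integral>\<^sup>+ x. 0 \<partial>unifM)"
  proof (rule nn_integral_cong)
    fix x :: real
    have "Pair x -` {p::real\<times>real. fst p = snd p} = {x}" by auto
    then show "emeasure unifM (Pair x -` {p::real\<times>real. fst p = snd p}) = 0" using unifM_point by simp
  qed
  finally show ?thesis using D by (simp add: null_sets_def)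
qed

lemma tie_pair_null:
  assumes ij: "i \<in> {1..n}" "j \<in> {1..n}" "i \<noteq> j"
  shows "{U \<in> space (unif_input n). U i = U j} \<in> null_sets (unif_input n)"
proof -
  have mp: "(\<lambda>\<omega>. (\<omega> i, \<omega> j)) \<in> measurable (unif_input n) (unifM \<Otimes>\<^sub>M unifM)"
    unfolding unif_input_def using ij by (intro measurable_Pair measurable_component_singleton) auto
  have D: "{p. fst p = snd p} \<in> sets (unifM \<Otimes>\<^sub>M unifM)" using diag_null by auto
  have e: "{U \<in> space (unif_input n). U i = U j} = (\<lambda>\<omega>. (\<omega> i, \<omega> j)) -` {p. fst p = snd p} \<inter> space (unif_input n)"
    by auto
  have "emeasure (unif_input n) {U \<in> space (unif_input n). U i = U j}
        = emeasure (distr (unif_input n) (unifM \<Otimes>\<^sub>M unifM) (\<lambda>\<omega>. (\<omega> i, \<omega> j))) {p. fst p = snd p}"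
    unfolding e by (rule emeasure_distr[OF mp D, symmetric])
  also have "\<dots> = 0" unfolding pair_distr[OF ij] using diag_null by auto
  finally show ?thesis using measurable_sets[OF mp D] e by (simp add: null_sets_def)
qed




definition sidx :: "nat \<Rightarrow> nat \<Rightarrow> nat \<Rightarrow> nat \<Rightarrow> nat list" where
  "sidx t1 t2 t3 n = [1..<t1 + t2 + 2] @ [n - t3..<n + 1]"

lemma yq_P_alt: "yq_P t1 t2 t3 n U = sort (map U (sidx t1 t2 t3 n)) ! t1"
  by (simp add: yq_P_def yq_sample_def sidx_def)

lemma yq_Q_alt: "yq_Q t1 t2 t3 n U = sort (map U (sidx t1 t2 t3 n)) ! (t1 + t2 + 1)"
  by (simp add: yq_Q_def yq_sample_def sidx_def)

lemma sidx_props: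
  assumes kn: "t1 + t2 + t3 + 2 \<le> n"
  shows "set (sidx t1 t2 t3 n) \<subseteq> {1..n}" "length (sidx t1 t2 t3 n) = t1 + t2 + t3 + 2"
    "set (sidx t1 t2 t3 n) \<inter> yq_ord t1 t2 t3 n = {}" "yq_ord t1 t2 t3 n \<subseteq> {1..n}"
  using kn by (auto simp: sidx_def yq_ord_def)

lemma yq_PQ:
  assumes kn: "t1 + t2 + t3 + 2 \<le> n"
  shows "\<exists>j0\<in>set (sidx t1 t2 t3 n). yq_P t1 t2 t3 n U = U j0"
    "\<exists>j1\<in>set (sidx t1 t2 t3 n). yq_Q t1 t2 t3 n U = U j1"
    "yq_P t1 t2 t3 n U \<le> yq_Q t1 t2 t3 n U"
proof -
  let ?s = "sort (map U (sidx t1 t2 t3 n))"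
  have len: "length ?s = t1 + t2 + t3 + 2" using sidx_props(2)[OF kn] by simp
  have "?s ! t1 \<in> set ?s" by (rule nth_mem) (simp add: sidx_props(2)[OF kn])
  then have "?s ! t1 \<in> set (map U (sidx t1 t2 t3 n))" by simp
  then show "\<exists>j0\<in>set (sidx t1 t2 t3 n). yq_P t1 t2 t3 n U = U j0" by (auto simp: yq_P_alt)
  have "?s ! (t1 + t2 + 1) \<in> set ?s" by (rule nth_mem) (simp add: sidx_props(2)[OF kn])
  then have "?s ! (t1 + t2 + 1) \<in> set (map U (sidx t1 t2 t3 n))" by simp
  then show "\<exists>j1\<in>set (sidx t1 t2 t3 n). yq_Q t1 t2 t3 n U = U j1" by (auto simp: yq_Q_alt)
  have "?s ! t1 \<le> ?s ! (t1 + t2 + 1)" using len by (intro sorted_nth_mono) auto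
  then show "yq_P t1 t2 t3 n U \<le> yq_Q t1 t2 t3 n U" by (simp add: yq_P_alt yq_Q_alt)
qed

lemma yq_transfer:
  assumes kn: "t1 + t2 + t3 + 2 \<le> n" and ce: "cmpeq n U V"
  shows "yq_I t1 t2 t3 n U = yq_I t1 t2 t3 n V"
    "yq_TS t1 t2 t3 n U = yq_TS t1 t2 t3 n V"
    "{j\<in>yq_ord t1 t2 t3 n. yq_Q t1 t2 t3 n U < U j} = {j\<in>yq_ord t1 t2 t3 n. yq_Q t1 t2 t3 n V < V j}"
proof -
  let ?idx = "sidx t1 t2 t3 n"
  have sub: "set ?idx \<subseteq> {1..n}" and len: "length ?idx = t1 + t2 + t3 + 2"
    and osub: "yq_ord t1 t2 t3 n \<subseteq> {1..n}" using sidx_props[OF kn] by auto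
  have eqi: "\<forall>i\<in>set ?idx. \<forall>j\<in>set ?idx. (U i \<le> U j \<longleftrightarrow> V i \<le> V j)"
    using ce sub unfolding cmpeq_def by blast
  obtain j0 where j0: "j0 \<in> set ?idx" "yq_P t1 t2 t3 n U = U j0" "yq_P t1 t2 t3 n V = V j0"
    using sort_nth_transfer[OF eqi, of t1] len unfolding yq_P_alt by auto
  obtain j1 where j1: "j1 \<in> set ?idx" "yq_Q t1 t2 t3 n U = U j1" "yq_Q t1 t2 t3 n V = V j1"
    using sort_nth_transfer[OF eqi, of "t1 + t2 + 1"] len unfolding yq_Q_alt by auto
  have j01: "j0 \<in> {1..n}" "j1 \<in> {1..n}" using j0 j1 sub by auto
  have cmpj: "(U a \<le> U b) = (V a \<le> V b)" if "a \<in> {1..n}" "b \<in> {1..n}" for a b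
    using ce that unfolding cmpeq_def by blast
  have c1: "(U j < yq_P t1 t2 t3 n U) = (V j < yq_P t1 t2 t3 n V)"
    "(yq_P t1 t2 t3 n U < U j) = (yq_P t1 t2 t3 n V < V j)"
    "(U j < yq_Q t1 t2 t3 n U) = (V j < yq_Q t1 t2 t3 n V)"
    "(yq_Q t1 t2 t3 n U < U j) = (yq_Q t1 t2 t3 n V < V j)"
    "(yq_Q t1 t2 t3 n U \<le> U j) = (yq_Q t1 t2 t3 n V \<le> V j)"
    if "j \<in> {1..n}" for j
    using cmpj[OF that j01(1)] cmpj[OF j01(1) that] cmpj[OF that j01(2)] cmpj[OF j01(2) that] j0 j1
    by (auto simp: not_le[symmetric])
  show "yq_I t1 t2 t3 n U = yq_I t1 t2 t3 n V"
  proof -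
    have "{i\<in>yq_ord t1 t2 t3 n. U i < yq_P t1 t2 t3 n U} = {i\<in>yq_ord t1 t2 t3 n. V i < yq_P t1 t2 t3 n V}"
      "{i\<in>yq_ord t1 t2 t3 n. yq_P t1 t2 t3 n U < U i \<and> U i < yq_Q t1 t2 t3 n U} = {i\<in>yq_ord t1 t2 t3 n. yq_P t1 t2 t3 n V < V i \<and> V i < yq_Q t1 t2 t3 n V}"
      "{i\<in>yq_ord t1 t2 t3 n. U i > yq_Q t1 t2 t3 n U} = {i\<in>yq_ord t1 t2 t3 n. V i > yq_Q t1 t2 t3 n V}"
      using c1 osub by blast+
    then show ?thesis unfolding yq_I_def Let_def by simp
  qed
  show "{j\<in>yq_ord t1 t2 t3 n. yq_Q t1 t2 t3 n U < U j} = {j\<in>yq_ord t1 t2 t3 n. yq_Q t1 t2 t3 n V < V j}"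
    using c1 osub by blast
  have "snd (yq_first_partition t1 t2 t3 n U) = snd (yq_first_partition t1 t2 t3 n V)"
    unfolding yq_first_partition_def
  proof (rule part_loop_cong[where lo = "t1 + t2 + 2" and hi = "n - t3 - 1"])
    show "\<forall>j. t1 + t2 + 2 \<le> j \<and> j \<le> n - t3 - 1 \<longrightarrow>
      (U j < yq_P t1 t2 t3 n U) = (V j < yq_P t1 t2 t3 n V) \<and>
      (yq_Q t1 t2 t3 n U \<le> U j) = (yq_Q t1 t2 t3 n V \<le> V j) \<and>
      (yq_Q t1 t2 t3 n U < U j) = (yq_Q t1 t2 t3 n V < V j)"
    proof (intro allI impI)
      fix j assume "t1 + t2 + 2 \<le> j \<and> j \<le> n - t3 - 1"
      then have "j \<in> {1..n}" by auto
      then show "(U j < yq_P t1 t2 t3 n U) = (V j < yq_P t1 t2 t3 n V) \<and>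
      (yq_Q t1 t2 t3 n U \<le> U j) = (yq_Q t1 t2 t3 n V \<le> V j) \<and>
      (yq_Q t1 t2 t3 n U < U j) = (yq_Q t1 t2 t3 n V < V j)" using c1 by blast
    qed
  qed auto
  then show "yq_TS t1 t2 t3 n U = yq_TS t1 t2 t3 n V" unfolding yq_TS_def by simp
qed

definition Tie :: "nat \<Rightarrow> (nat \<Rightarrow> real) set" where
  "Tie n = (\<Union>i\<in>{1..n}. \<Union>j\<in>{1..n} - {i}. {U \<in> space (unif_input n). U i = U j})"

lemma Tie_null: "Tie n \<in> null_sets (unif_input n)"
  unfolding Tie_def by (intro null_sets_UN' tie_pair_null) auto

lemma good_noties:
  assumes kn: "t1 + t2 + t3 + 2 \<le> n" and U: "U \<in> space (unif_input n)" "U \<notin> Tie n"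
    and j: "j \<in> yq_ord t1 t2 t3 n"
  shows "U j \<noteq> yq_P t1 t2 t3 n U" "U j \<noteq> yq_Q t1 t2 t3 n U"
proof -
  obtain j0 where j0: "j0 \<in> set (sidx t1 t2 t3 n)" "yq_P t1 t2 t3 n U = U j0" using yq_PQ(1)[OF kn] by blast
  obtain j1 where j1: "j1 \<in> set (sidx t1 t2 t3 n)" "yq_Q t1 t2 t3 n U = U j1" using yq_PQ(2)[OF kn] by blast
  have "j \<noteq> j0" "j \<noteq> j1" using j j0 j1 sidx_props(3)[OF kn] by auto
  moreover have "j \<in> {1..n}" "j0 \<in> {1..n}" "j1 \<in> {1..n}" using j j0 j1 sidx_props[OF kn] by auto
  moreover have T: "U \<in> Tie n" if "a \<in> {1..n}" "b \<in> {1..n}" "a \<noteq> b" "U a = U b" for a b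
    unfolding Tie_def
  proof (rule UN_I[OF that(1)], rule UN_I[of b])
    show "b \<in> {1..n} - {a}" using that by auto
    show "U \<in> {U \<in> space (unif_input n). U a = U b}" using that U by auto
  qed
  ultimately show "U j \<noteq> yq_P t1 t2 t3 n U" "U j \<noteq> yq_Q t1 t2 t3 n U"
    using U j0 j1 by metis+
qed

lemma good_main:
  assumes kn: "t1 + t2 + t3 + 2 \<le> n" and U: "U \<in> space (unif_input n)" "U \<notin> Tie n"
  defines "c \<equiv> n - t3 - card {j\<in>yq_ord t1 t2 t3 n. yq_Q t1 t2 t3 n U < U j}"
  shows "yq_K t1 t2 t3 n U = {t1 + t2 + 2..< c + (if c \<le> n - t3 - 1 \<and> yq_Q t1 t2 t3 n U < U c then 1 else 0)}"
    "yq_TS t1 t2 t3 n U = fst (yq_I t1 t2 t3 n U) + yq_lK t1 t2 t3 n U"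
proof -
  have noQ: "\<forall>j\<in>{t1 + t2 + 2..n - t3 - 1}. U j \<noteq> yq_Q t1 t2 t3 n U"
    using good_noties(2)[OF kn U] by (auto simp: yq_ord_def)
  have hh: "n - t3 - 1 + 1 = n - t3" using kn by simp
  note pm = part_main[of "t1 + t2 + 2" "n - t3 - 1" "yq_P t1 t2 t3 n U" "yq_Q t1 t2 t3 n U" U, OF _ _ yq_PQ(3)[OF kn] noQ]
  have pm': "snd (snd (snd (snd (yq_first_partition t1 t2 t3 n U)))) = {t1 + t2 + 2..< c + (if c \<le> n - t3 - 1 \<and> yq_Q t1 t2 t3 n U < U c then 1 else 0)}
     \<and> fst (snd (snd (snd (yq_first_partition t1 t2 t3 n U)))) =
        card {j\<in>{t1 + t2 + 2..n - t3 - 1}. U j < yq_P t1 t2 t3 n U} + card {j\<in>snd (snd (snd (snd (yq_first_partition t1 t2 t3 n U)))). yq_Q t1 t2 t3 n U < U j}"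
    using pm kn unfolding yq_first_partition_def c_def hh yq_ord_def by simp
  then show "yq_K t1 t2 t3 n U = {t1 + t2 + 2..< c + (if c \<le> n - t3 - 1 \<and> yq_Q t1 t2 t3 n U < U c then 1 else 0)}"
    unfolding yq_K_def by simp
  show "yq_TS t1 t2 t3 n U = fst (yq_I t1 t2 t3 n U) + yq_lK t1 t2 t3 n U"
    using pm' unfolding yq_TS_def yq_I_def yq_lK_def yq_K_def Let_def yq_ord_def by simp
qed

lemma first_conj:
  assumes kn: "t1 + t2 + t3 + 2 \<le> n"
  shows "AE U in unif_input n. yq_TS t1 t2 t3 n U = fst (yq_I t1 t2 t3 n U) + yq_lK t1 t2 t3 n U"
proof (rule AE_I'[OF Tie_null], rule subsetI)
  fix U assume "U \<in> {U \<in> space (unif_input n). yq_TS t1 t2 t3 n U \<noteq> fst (yq_I t1 t2 t3 n U) + yq_lK t1 t2 t3 n U}"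
  then show "U \<in> Tie n" using good_main(2)[OF kn, of U] by auto
qed




definition LsetF :: "nat \<Rightarrow> nat \<Rightarrow> nat \<Rightarrow> nat \<Rightarrow> (nat \<Rightarrow> real) \<Rightarrow> nat set" where
  "LsetF t1 t2 t3 n U = {j\<in>yq_ord t1 t2 t3 n. yq_Q t1 t2 t3 n U < U j}"

definition EL :: "nat \<Rightarrow> nat \<Rightarrow> nat \<Rightarrow> nat \<Rightarrow> nat \<times> nat \<times> nat \<Rightarrow> nat set \<Rightarrow> (nat \<Rightarrow> real) set" where
  "EL t1 t2 t3 n i L = {U \<in> space (unif_input n). yq_I t1 t2 t3 n U = i \<and> LsetF t1 t2 t3 n U = L}"

lemma perm_exists:
  assumes "finite Om" "L \<subseteq> Om" "L' \<subseteq> Om" "card L = card L'"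
  shows "\<exists>\<sigma>. bij_betw \<sigma> Om Om \<and> \<sigma> ` L = L'"
proof -
  have fL: "finite L" "finite L'" using assms finite_subset by auto
  obtain h1 where h1: "bij_betw h1 L L'" using finite_same_card_bij[OF fL assms(4)] by blast
  have "card (Om - L) = card (Om - L')" using assms fL by (simp add: card_Diff_subset)
  then obtain h2 where h2: "bij_betw h2 (Om - L) (Om - L')"
    using finite_same_card_bij[OF finite_Diff[OF assms(1)] finite_Diff[OF assms(1)]] by metis
  define \<sigma> where "\<sigma> j = (if j \<in> L then h1 j else h2 j)" for j
  have b1: "bij_betw \<sigma> L L'" using h1 by (rule bij_betw_cong[THEN iffD1, rotated]) (simp add: \<sigma>_def)
  have b2: "bij_betw \<sigma> (Om - L) (Om - L')" using h2 by (rule bij_betw_cong[THEN iffD1, rotated]) (simp add: \<sigma>_def)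
  have "bij_betw \<sigma> (L \<union> (Om - L)) (L' \<union> (Om - L'))" by (rule bij_betw_combine[OF b1 b2]) auto
  moreover have "L \<union> (Om - L) = Om" "L' \<union> (Om - L') = Om" using assms by auto
  ultimately have "bij_betw \<sigma> Om Om" by simp
  moreover have "\<sigma> ` L = L'" using b1 by (simp add: bij_betw_def)
  ultimately show ?thesis by blast
qed

lemma card_bij_pred:
  assumes "bij_betw \<sigma> Om Om"
  shows "card {j\<in>Om. \<phi> (\<sigma> j)} = card {j\<in>Om. \<phi> j}"
proof -
  have inj: "inj_on \<sigma> Om" and img: "\<sigma> ` Om = Om" using assms by (auto simp: bij_betw_def)
  have e: "\<sigma> ` {j\<in>Om. \<phi> (\<sigma> j)} = {j\<in>Om. \<phi> j}"
  proof (intro equalityI subsetI)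
    fix y assume "y \<in> \<sigma> ` {j\<in>Om. \<phi> (\<sigma> j)}"
    then obtain j where j: "j \<in> Om" "\<phi> (\<sigma> j)" "y = \<sigma> j" by auto
    then have "\<sigma> j \<in> Om" using img by auto
    then show "y \<in> {j\<in>Om. \<phi> j}" using j by auto
  next
    fix y assume y: "y \<in> {j\<in>Om. \<phi> j}"
    then have "y \<in> \<sigma> ` Om" using img by simp
    then obtain j where j: "j \<in> Om" "y = \<sigma> j" by auto
    then show "y \<in> \<sigma> ` {j\<in>Om. \<phi> (\<sigma> j)}" using y by auto
  qed
  have "inj_on \<sigma> {j\<in>Om. \<phi> (\<sigma> j)}" by (rule inj_on_subset[OF inj]) auto
  then have "card (\<sigma> ` {j\<in>Om. \<phi> (\<sigma> j)}) = card {j\<in>Om. \<phi> (\<sigma> j)}" by (rule card_image)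
  then show ?thesis using e by simp
qed

lemma img_bij_pred:
  assumes "bij_betw \<sigma> Om Om"
  shows "\<sigma> ` {j\<in>Om. \<phi> (\<sigma> j)} = {j\<in>Om. \<phi> j}"
proof -
  have img: "\<sigma> ` Om = Om" using assms by (auto simp: bij_betw_def)
  show ?thesis
  proof (intro equalityI subsetI)
    fix y assume "y \<in> \<sigma> ` {j\<in>Om. \<phi> (\<sigma> j)}"
    then obtain j where j: "j \<in> Om" "\<phi> (\<sigma> j)" "y = \<sigma> j" by auto
    then have "\<sigma> j \<in> Om" using img by auto
    then show "y \<in> {j\<in>Om. \<phi> j}" using j by auto
  next
    fix y assume y: "y \<in> {j\<in>Om. \<phi> j}"
    then have "y \<in> \<sigma> ` Om" using img by simp
    then obtain j where j: "j \<in> Om" "y = \<sigma> j" by auto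
    then show "y \<in> \<sigma> ` {j\<in>Om. \<phi> (\<sigma> j)}" using y by auto
  qed
qed

lemma yq_measurable:
  assumes kn: "t1 + t2 + t3 + 2 \<le> n"
  shows "{U \<in> space (unif_input n). (yq_I t1 t2 t3 n U, LsetF t1 t2 t3 n U, yq_TS t1 t2 t3 n U) \<in> S} \<in> sets (unif_input n)"
  by (rule cmp_measurable) (use yq_transfer[OF kn] in \<open>auto simp: LsetF_def\<close>)

lemma EL_meas:
  assumes kn: "t1 + t2 + t3 + 2 \<le> n"
  shows "EL t1 t2 t3 n i L \<in> sets (unif_input n)"
proof -
  have "EL t1 t2 t3 n i L = {U \<in> space (unif_input n). (yq_I t1 t2 t3 n U, LsetF t1 t2 t3 n U, yq_TS t1 t2 t3 n U) \<in> {i} \<times> {L} \<times> UNIV}"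
    by (auto simp: EL_def)
  then show ?thesis using yq_measurable[OF kn, of "{i} \<times> {L} \<times> UNIV"] by simp
qed

lemma EL_sym:
  assumes kn: "t1 + t2 + t3 + 2 \<le> n"
    and L: "L \<subseteq> yq_ord t1 t2 t3 n" "L' \<subseteq> yq_ord t1 t2 t3 n" "card L = card L'"
  shows "measure (unif_input n) (EL t1 t2 t3 n i L') = measure (unif_input n) (EL t1 t2 t3 n i L)"
proof -
  define Om where "Om = yq_ord t1 t2 t3 n"
  have fO: "finite Om" by (simp add: Om_def yq_ord_def)
  obtain \<sigma> where \<sigma>: "bij_betw \<sigma> Om Om" "\<sigma> ` L = L'" using perm_exists[OF fO] L unfolding Om_def by blast
  define \<tau> where "\<tau> j = (if j \<in> Om then \<sigma> j else j)" for j
  have Osub: "Om \<subseteq> {1..n}" using sidx_props(4)[OF kn] by (simp add: Om_def)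
  have sO: "\<sigma> j \<in> Om" if "j \<in> Om" for j using \<sigma>(1) that by (auto simp: bij_betw_def)
  have injs: "inj_on \<sigma> Om" using \<sigma>(1) by (auto simp: bij_betw_def)
  have tin: "\<tau> \<in> {1..n} \<rightarrow> {1..n}"
  proof
    fix x assume x: "x \<in> {1..n}"
    show "\<tau> x \<in> {1..n}"
    proof (cases "x \<in> Om")
      case True then show ?thesis using subsetD[OF Osub sO[OF True]] by (simp add: \<tau>_def)
    next
      case False then show ?thesis using x by (simp add: \<tau>_def)
    qed
  qed
  have tinj: "inj_on \<tau> {1..n}"
  proof (rule inj_onI)
    fix a b assume ab: "a \<in> {1..n}" "b \<in> {1..n}" "\<tau> a = \<tau> b"
    show "a = b"
    proof (cases "a \<in> Om")
      case True
      show ?thesis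
      proof (cases "b \<in> Om")
        case True2: True
        then show ?thesis using True ab injs by (auto simp: \<tau>_def inj_on_def)
      next
        case False
        then show ?thesis using True ab sO by (auto simp: \<tau>_def)
      qed
    next
      case False
      show ?thesis
      proof (cases "b \<in> Om")
        case True
        then show ?thesis using False ab sO by (auto simp: \<tau>_def)
      next
        case False2: False
        then show ?thesis using False ab by (auto simp: \<tau>_def)
      qed
    qed
  qed
  define T where "T U = (\<lambda>j\<in>{1..n}. U (\<tau> j))" for U :: "nat \<Rightarrow> real"
  have Tm: "T \<in> measurable (unif_input n) (unif_input n)"
    unfolding unif_input_def T_def
    by (rule measurable_restrict) (use tin in \<open>auto intro!: measurable_component_singleton\<close>)
  have dist: "distr (unif_input n) (unif_input n) T = unif_input n"
    unfolding unif_input_def T_def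
    using distr_PiM_reindex[of "{1..n}" "\<lambda>_. unifM" \<tau> "{1..n}"] prob_unifM tinj tin by simp
  have sid: "\<tau> j = j" if "j \<in> set (sidx t1 t2 t3 n)" for j
    using that sidx_props(3)[OF kn] by (auto simp: \<tau>_def Om_def)
  have key: "T U \<in> EL t1 t2 t3 n i L \<longleftrightarrow> U \<in> EL t1 t2 t3 n i L'" if U: "U \<in> space (unif_input n)" for U
  proof -
    have TU: "T U \<in> space (unif_input n)" using measurable_space[OF Tm U] .
    have mp: "map (T U) (sidx t1 t2 t3 n) = map U (sidx t1 t2 t3 n)"
      using sid sidx_props(1)[OF kn] by (auto simp: T_def)
    have PP: "yq_P t1 t2 t3 n (T U) = yq_P t1 t2 t3 n U" "yq_Q t1 t2 t3 n (T U) = yq_Q t1 t2 t3 n U"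
      unfolding yq_P_alt yq_Q_alt mp by (rule refl)+
    have TUj: "T U j = U (\<sigma> j)" if "j \<in> Om" for j using that Osub by (auto simp: T_def \<tau>_def)
    have cnt: "card {j\<in>Om. \<phi> (T U j)} = card {j\<in>Om. \<phi> (U j)}" for \<phi>
    proof -
      have "{j\<in>Om. \<phi> (T U j)} = {j\<in>Om. \<phi> (U (\<sigma> j))}" using TUj by auto
      then show ?thesis using card_bij_pred[OF \<sigma>(1), of "\<lambda>j. \<phi> (U j)"] by simp
    qed
    have II: "yq_I t1 t2 t3 n (T U) = yq_I t1 t2 t3 n U"
      unfolding yq_I_def Let_def PP Om_def[symmetric]
      using cnt[of "\<lambda>v. v < yq_P t1 t2 t3 n U"] cnt[of "\<lambda>v. yq_P t1 t2 t3 n U < v \<and> v < yq_Q t1 t2 t3 n U"]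
        cnt[of "\<lambda>v. yq_Q t1 t2 t3 n U < v"] by simp
    have LT: "LsetF t1 t2 t3 n (T U) = {j\<in>Om. yq_Q t1 t2 t3 n U < U (\<sigma> j)}"
      unfolding LsetF_def PP Om_def[symmetric] using TUj by auto
    have LU: "LsetF t1 t2 t3 n U = {j\<in>Om. yq_Q t1 t2 t3 n U < U j}" unfolding LsetF_def Om_def by simp
    have imgL: "\<sigma> ` LsetF t1 t2 t3 n (T U) = LsetF t1 t2 t3 n U"
      unfolding LT LU by (rule img_bij_pred[OF \<sigma>(1)])
    have "LsetF t1 t2 t3 n (T U) = L \<longleftrightarrow> LsetF t1 t2 t3 n U = L'"
    proof
      assume "LsetF t1 t2 t3 n (T U) = L"
      then show "LsetF t1 t2 t3 n U = L'" using imgL \<sigma>(2) by simp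
    next
      assume a: "LsetF t1 t2 t3 n U = L'"
      have "\<sigma> ` LsetF t1 t2 t3 n (T U) = \<sigma> ` L" using imgL a \<sigma>(2) by simp
      moreover have "LsetF t1 t2 t3 n (T U) \<subseteq> Om" unfolding LT by auto
      ultimately show "LsetF t1 t2 t3 n (T U) = L"
        using inj_on_image_eq_iff[OF injs] L(1) unfolding Om_def by blast
    qed
    then show ?thesis using U TU II unfolding EL_def by auto
  qed
  have pre: "T -` EL t1 t2 t3 n i L \<inter> space (unif_input n) = EL t1 t2 t3 n i L'"
    using key by (auto simp: EL_def)
  have "measure (unif_input n) (EL t1 t2 t3 n i L) = measure (distr (unif_input n) (unif_input n) T) (EL t1 t2 t3 n i L)"
    unfolding dist ..
  also have "\<dots> = measure (unif_input n) (T -` EL t1 t2 t3 n i L \<inter> space (unif_input n))"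
    by (rule measure_distr[OF Tm EL_meas[OF kn]])
  finally show ?thesis unfolding pre by simp
qed




definition Lfam :: "nat \<Rightarrow> nat \<Rightarrow> nat \<Rightarrow> nat set set" where
  "Lfam lo hi r = {L. L \<subseteq> {lo..hi} \<and> card L = r}"

lemma Lfam_fin: "finite (Lfam lo hi r)"
  by (rule finite_subset[of _ "Pow {lo..hi}"]) (auto simp: Lfam_def)

lemma Lfam_ne:
  assumes "lo + r \<le> hi + 1"
  shows "Lfam lo hi r \<noteq> {}"
proof -
  have "{lo..<lo + r} \<in> Lfam lo hi r" using assms by (auto simp: Lfam_def)
  then show ?thesis by auto
qed

lemma Lfam_card: "card (Lfam lo hi r) = (hi + 1 - lo) choose r"
  unfolding Lfam_def by (simp add: n_subsets)

lemma phi_props: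
  assumes lh: "lo \<le> hi + 1" and ar: "a + r = hi + 1 - lo"
  defines "\<phi> \<equiv> \<lambda>L. (\<lambda>j. hi - j) ` ({lo..hi} - L)"
  shows "bij_betw \<phi> (Lfam lo hi r) {S. S \<subseteq> {..<hi + 1 - lo} \<and> card S = a}"
    "\<And>L. L \<in> Lfam lo hi r \<Longrightarrow> card (L \<inter> {lo..<lo + a}) = card (\<phi> L \<inter> {..<r})"
proof -
  define N where "N = hi + 1 - lo"
  define \<rho> where "\<rho> j = hi - j" for j :: nat
  have rinj: "inj_on \<rho> {lo..hi}" by (auto simp: \<rho>_def inj_on_def)
  have rimg: "\<rho> ` {lo..hi} = {..<N}"
  proof (intro equalityI subsetI)
    fix y assume "y \<in> \<rho> ` {lo..hi}" then show "y \<in> {..<N}" using lh by (auto simp: \<rho>_def N_def)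
  next
    fix y assume y: "y \<in> {..<N}"
    then have "hi - y \<in> {lo..hi}" "\<rho> (hi - y) = y" using lh by (auto simp: \<rho>_def N_def)
    then show "y \<in> \<rho> ` {lo..hi}" by (metis image_eqI)
  qed
  have rr: "\<rho> (\<rho> s) = s" if "s < N" for s using that lh by (auto simp: \<rho>_def N_def)
  have rS: "\<rho> ` S \<subseteq> {lo..hi}" if "S \<subseteq> {..<N}" for S
    using that lh by (auto simp: \<rho>_def N_def)
  have phi: "\<phi> L = \<rho> ` ({lo..hi} - L)" for L by (simp add: \<phi>_def \<rho>_def)
  show "bij_betw \<phi> (Lfam lo hi r) {S. S \<subseteq> {..<hi + 1 - lo} \<and> card S = a}"
    unfolding N_def[symmetric]
  proof (rule bij_betw_imageI)
    show "inj_on \<phi> (Lfam lo hi r)"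
    proof (rule inj_onI)
      fix L L' assume L: "L \<in> Lfam lo hi r" "L' \<in> Lfam lo hi r" "\<phi> L = \<phi> L'"
      then have "{lo..hi} - L = {lo..hi} - L'"
        using inj_on_image_eq_iff[OF rinj, of "{lo..hi} - L" "{lo..hi} - L'"] by (simp add: phi)
      then show "L = L'" using L(1,2) by (auto simp: Lfam_def)
    qed
    show "\<phi> ` Lfam lo hi r = {S. S \<subseteq> {..<N} \<and> card S = a}"
    proof (intro equalityI subsetI)
      fix S assume "S \<in> \<phi> ` Lfam lo hi r"
      then obtain L where L: "L \<in> Lfam lo hi r" "S = \<phi> L" by auto
      have "S \<subseteq> {..<N}" using L rimg by (auto simp: phi)
      moreover have "card S = card ({lo..hi} - L)"
        using L(2) card_image[OF inj_on_subset[OF rinj, of "{lo..hi} - L"]] by (auto simp: phi)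
      moreover have "card ({lo..hi} - L) = a"
        using L(1) ar by (auto simp: Lfam_def card_Diff_subset finite_subset)
      ultimately show "S \<in> {S. S \<subseteq> {..<N} \<and> card S = a}" by simp
    next
      fix S assume S: "S \<in> {S. S \<subseteq> {..<N} \<and> card S = a}"
      define L where "L = {lo..hi} - \<rho> ` S"
      have sub: "\<rho> ` S \<subseteq> {lo..hi}" using S rS by auto
      have rinj2: "inj_on \<rho> {..hi}" by (auto simp: \<rho>_def inj_on_def)
      have Sh: "S \<subseteq> {..hi}" using S by (auto simp: N_def)
      have cS: "card (\<rho> ` S) = a" using S card_image[OF inj_on_subset[OF rinj2 Sh]] by simp
      have "L \<in> Lfam lo hi r" unfolding L_def Lfam_def
        using sub cS ar by (auto simp: card_Diff_subset finite_subset)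
      moreover have "\<phi> L = S"
      proof -
        have "{lo..hi} - L = \<rho> ` S" unfolding L_def using sub by auto
        then have "\<phi> L = \<rho> ` \<rho> ` S" by (simp add: phi)
        also have "\<dots> = (\<lambda>s. \<rho> (\<rho> s)) ` S" by (simp add: image_image)
        also have "\<dots> = (\<lambda>s. s) ` S" by (rule image_cong) (use S rr in auto)
        also have "\<dots> = S" by simp
        finally show ?thesis .
      qed
      ultimately show "S \<in> \<phi> ` Lfam lo hi r" by (metis image_eqI)
    qed
  qed
  fix L assume L: "L \<in> Lfam lo hi r"
  define c where "c = lo + a"
  have c: "c = hi + 1 - r" using ar lh by (simp add: c_def)
  have "\<phi> L \<inter> {..<r} = \<rho> ` (({lo..hi} - L) \<inter> {c..hi})"
  proof (intro equalityI subsetI)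
    fix y assume "y \<in> \<phi> L \<inter> {..<r}"
    then obtain j where j: "j \<in> {lo..hi} - L" "y = \<rho> j" "\<rho> j < r" by (auto simp: phi)
    then have "c \<le> j" using c by (auto simp: \<rho>_def)
    then show "y \<in> \<rho> ` (({lo..hi} - L) \<inter> {c..hi})" using j by auto
  next
    fix y assume "y \<in> \<rho> ` (({lo..hi} - L) \<inter> {c..hi})"
    then obtain j where j: "j \<in> {lo..hi} - L" "c \<le> j" "y = \<rho> j" by auto
    then have "\<rho> j < r" using c lh ar by (auto simp: \<rho>_def)
    then show "y \<in> \<phi> L \<inter> {..<r}" using j by (auto simp: phi)
  qed
  then have "card (\<phi> L \<inter> {..<r}) = card (({lo..hi} - L) \<inter> {c..hi})"
    using card_image[OF inj_on_subset[OF rinj, of "({lo..hi} - L) \<inter> {c..hi}"]] by auto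
  also have "({lo..hi} - L) \<inter> {c..hi} = {c..hi} - (L \<inter> {c..hi})" using c_def by auto
  also have "card \<dots> = r - card (L \<inter> {c..hi})"
    using c lh ar by (subst card_Diff_subset) auto
  finally have e1: "card (\<phi> L \<inter> {..<r}) = r - card (L \<inter> {c..hi})" .
  have e2: "r = card (L \<inter> {lo..<c}) + card (L \<inter> {c..hi})"
  proof -
    have "L = (L \<inter> {lo..<c}) \<union> (L \<inter> {c..hi})" using L by (auto simp: Lfam_def)
    moreover have "card ((L \<inter> {lo..<c}) \<union> (L \<inter> {c..hi})) = card (L \<inter> {lo..<c}) + card (L \<inter> {c..hi})"
      by (rule card_Un_disjoint) auto
    ultimately show ?thesis using L by (auto simp: Lfam_def)
  qed
  show "card (L \<inter> {lo..<lo + a}) = card (\<phi> L \<inter> {..<r})" using e1 e2 by (simp add: c_def)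
qed

definition pL :: "nat \<Rightarrow> nat \<Rightarrow> nat \<Rightarrow> nat \<Rightarrow> (nat \<times> bool) pmf" where
  "pL lo hi a r = map_pmf (\<lambda>L. (card (L \<inter> {lo..<lo + a}), lo + a \<in> L)) (pmf_of_set (Lfam lo hi r))"

lemma pL_fst:
  assumes lh: "lo \<le> hi + 1" and ar: "a + r = hi + 1 - lo"
  shows "map_pmf fst (pL lo hi a r) = hypg_pmf a r (hi + 1 - lo)"
proof -
  define \<phi> where "\<phi> = (\<lambda>L. (\<lambda>j. hi - j) ` ({lo..hi} - L))"
  have ne: "Lfam lo hi r \<noteq> {}" using lh ar by (intro Lfam_ne) simp
  note fin = Lfam_fin[of lo hi r]
  note pp = phi_props[OF lh ar, folded \<phi>_def]
  have "map_pmf fst (pL lo hi a r) = map_pmf (\<lambda>L. card (L \<inter> {lo..<lo + a})) (pmf_of_set (Lfam lo hi r))"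
    by (simp add: pL_def map_pmf_comp)
  also have "\<dots> = map_pmf (\<lambda>L. card (\<phi> L \<inter> {..<r})) (pmf_of_set (Lfam lo hi r))"
    by (rule map_pmf_cong[OF refl]) (use pp(2) set_pmf_of_set[OF ne fin] in \<open>auto simp: \<phi>_def\<close>)
  also have "\<dots> = map_pmf (\<lambda>S. card (S \<inter> {..<r})) (map_pmf \<phi> (pmf_of_set (Lfam lo hi r)))"
    by (simp add: map_pmf_comp)
  also have "map_pmf \<phi> (pmf_of_set (Lfam lo hi r)) = pmf_of_set (\<phi> ` Lfam lo hi r)"
    using pp(1) ne fin by (intro map_pmf_of_set_inj) (auto simp: bij_betw_def \<phi>_def)
  also have "\<phi> ` Lfam lo hi r = {S. S \<subseteq> {..<hi + 1 - lo} \<and> card S = a}"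
    using pp(1) by (simp add: bij_betw_def \<phi>_def)
  finally show ?thesis unfolding hypg_pmf_def .
qed

lemma cardA:
  assumes lh: "lo \<le> hi + 1" and ar: "a + r = hi + 1 - lo"
  shows "card {L\<in>Lfam lo hi r. lo + a \<in> L} * (hi + 1 - lo) = r * card (Lfam lo hi r)"
proof (cases r)
  case 0
  then have "lo + a = hi + 1" using ar lh by simp
  then have e: "{L\<in>Lfam lo hi r. lo + a \<in> L} = {}" by (auto simp: Lfam_def)
  have "card {L\<in>Lfam lo hi r. lo + a \<in> L} = 0" unfolding e by simp
  then show ?thesis using 0 by simp
next
  case (Suc k)
  define c where "c = lo + a"
  define N where "N = hi + 1 - lo"
  have cin: "c \<in> {lo..hi}" using ar lh Suc by (auto simp: c_def)
  obtain m where m: "N = Suc m" using ar Suc by (cases N) (auto simp: N_def)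
  have bij: "bij_betw (insert c) {L'. L' \<subseteq> {lo..hi} - {c} \<and> card L' = k} {L\<in>Lfam lo hi r. c \<in> L}"
  proof (rule bij_betw_imageI)
    show "inj_on (insert c) {L'. L' \<subseteq> {lo..hi} - {c} \<and> card L' = k}"
      by (rule inj_onI) (metis Diff_insert_absorb Diff_iff insertI1 mem_Collect_eq subsetD)
    show "insert c ` {L'. L' \<subseteq> {lo..hi} - {c} \<and> card L' = k} = {L\<in>Lfam lo hi r. c \<in> L}"
    proof (intro equalityI subsetI)
      fix L assume "L \<in> insert c ` {L'. L' \<subseteq> {lo..hi} - {c} \<and> card L' = k}"
      then obtain L' where L': "L' \<subseteq> {lo..hi} - {c}" "card L' = k" "L = insert c L'" by auto
      have "finite L'" using L'(1) finite_subset by blast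
      moreover have "c \<notin> L'" using L'(1) by auto
      ultimately have "card L = Suc k" using L' by simp
      then show "L \<in> {L\<in>Lfam lo hi r. c \<in> L}" using L' cin Suc by (auto simp: Lfam_def)
    next
      fix L assume L: "L \<in> {L\<in>Lfam lo hi r. c \<in> L}"
      have "finite L" using L finite_subset by (auto simp: Lfam_def)
      then have "card (L - {c}) = k" using L Suc by (auto simp: Lfam_def)
      moreover have "L - {c} \<subseteq> {lo..hi} - {c}" using L by (auto simp: Lfam_def)
      moreover have "L = insert c (L - {c})" using L by auto
      ultimately show "L \<in> insert c ` {L'. L' \<subseteq> {lo..hi} - {c} \<and> card L' = k}" by blast
    qed
  qed
  have "card {L\<in>Lfam lo hi r. c \<in> L} = card {L'. L' \<subseteq> {lo..hi} - {c} \<and> card L' = k}"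
    using bij_betw_same_card[OF bij] by simp
  also have "\<dots> = card ({lo..hi} - {c}) choose k" by (rule n_subsets) simp
  also have "card ({lo..hi} - {c}) = m" using cin m by (simp add: N_def)
  finally have cA: "card {L\<in>Lfam lo hi r. c \<in> L} = m choose k" .
  have cL: "card (Lfam lo hi r) = Suc m choose Suc k" using Lfam_card[of lo hi r] m Suc by (simp add: N_def)
  have "card {L\<in>Lfam lo hi r. c \<in> L} * N = (m choose k) * Suc m" unfolding cA m ..
  also have "\<dots> = Suc k * (Suc m choose Suc k)" by (metis Suc_times_binomial mult.commute)
  also have "\<dots> = r * card (Lfam lo hi r)" using cL Suc by metis
  finally show ?thesis unfolding c_def N_def .
qed

lemma pL_snd:
  assumes lh: "lo \<le> hi + 1" and ar: "a + r = hi + 1 - lo"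
  shows "map_pmf snd (pL lo hi a r) = bernoulli_pmf (real r / real (hi + 1 - lo))"
proof (rule pmf_eqI)
  fix b :: bool
  define N where "N = hi + 1 - lo"
  define A where "A = {L\<in>Lfam lo hi r. lo + a \<in> L}"
  have ne: "Lfam lo hi r \<noteq> {}" using lh ar by (intro Lfam_ne) simp
  note fin = Lfam_fin[of lo hi r]
  have cpos: "0 < card (Lfam lo hi r)" using ne fin by (simp add: card_gt_0_iff)
  have cA: "card A * N = r * card (Lfam lo hi r)" using cardA[OF lh ar] by (simp add: A_def N_def)
  have Asub: "A \<subseteq> Lfam lo hi r" by (auto simp: A_def)
  have rN: "r \<le> N" using ar by (simp add: N_def)
  have q: "real (card A) / real (card (Lfam lo hi r)) = real r / real N"
  proof (cases "N = 0")
    case True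
    then have "r = 0" using rN by simp
    then have "lo + a = hi + 1" using ar lh by simp
    then have "A = {}" by (auto simp: A_def Lfam_def)
    then show ?thesis using True by simp
  next
    case False
    then show ?thesis using cA cpos
      by (simp add: field_simps) (metis of_nat_mult mult.commute)
  qed
  have pm: "pmf (map_pmf snd (pL lo hi a r)) b = real (card (Lfam lo hi r \<inter> {L. (lo + a \<in> L) = b})) / real (card (Lfam lo hi r))"
    by (simp add: pL_def map_pmf_comp pmf_map measure_pmf_of_set[OF ne fin] vimage_def)
  have q01: "0 \<le> real r / real N" "real r / real N \<le> 1" using rN by (auto simp: divide_le_eq_1)
  show "pmf (map_pmf snd (pL lo hi a r)) b = pmf (bernoulli_pmf (real r / real (hi + 1 - lo))) b"
  proof (cases b)
    case True
    have "Lfam lo hi r \<inter> {L. (lo + a \<in> L) = b} = A" using True by (auto simp: A_def)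
    then show ?thesis using pm q q01 True by (simp add: N_def)
  next
    case False
    have "Lfam lo hi r \<inter> {L. (lo + a \<in> L) = b} = Lfam lo hi r - A" using False by (auto simp: A_def)
    moreover have "card (Lfam lo hi r - A) = card (Lfam lo hi r) - card A"
      using Asub fin by (simp add: card_Diff_subset finite_subset)
    moreover have "card A \<le> card (Lfam lo hi r)" using Asub fin by (simp add: card_mono)
    ultimately have "pmf (map_pmf snd (pL lo hi a r)) b = 1 - real (card A) / real (card (Lfam lo hi r))"
      using pm cpos by (simp add: of_nat_diff diff_divide_distrib)
    then show ?thesis using q q01 False by (simp add: N_def)
  qed
qed

lemma pL_val:
  assumes lh: "lo \<le> hi + 1" and ar: "a + r = hi + 1 - lo"
  shows "pmf (map_pmf (\<lambda>(x, b). i1 + x + of_bool b) (pL lo hi a r)) m =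
    real (card {L\<in>Lfam lo hi r. i1 + card (L \<inter> {lo..<lo + a}) + of_bool (lo + a \<in> L) = m}) / real (card (Lfam lo hi r))"
proof -
  have ne: "Lfam lo hi r \<noteq> {}" using lh ar by (intro Lfam_ne) simp
  note fin = Lfam_fin[of lo hi r]
  have "{L\<in>Lfam lo hi r. i1 + card (L \<inter> {lo..<lo + a}) + of_bool (lo + a \<in> L) = m}
     = Lfam lo hi r \<inter> (\<lambda>L. i1 + card (L \<inter> {lo..<lo + a}) + of_bool (lo + a \<in> L)) -` {m}" by auto
  then show ?thesis
    by (simp add: pL_def map_pmf_comp pmf_map measure_pmf_of_set[OF ne fin])
qed




lemma good_sumN:
  assumes kn: "t1 + t2 + t3 + 2 \<le> n" and U: "U \<in> space (unif_input n)" "U \<notin> Tie n"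
  shows "fst (yq_I t1 t2 t3 n U) + fst (snd (yq_I t1 t2 t3 n U)) + snd (snd (yq_I t1 t2 t3 n U)) = n - (t1 + t2 + t3 + 2)"
proof -
  define P where "P = yq_P t1 t2 t3 n U"
  define Q where "Q = yq_Q t1 t2 t3 n U"
  define Om where "Om = yq_ord t1 t2 t3 n"
  define S1 where "S1 = {i\<in>Om. U i < P}"
  define S2 where "S2 = {i\<in>Om. P < U i \<and> U i < Q}"
  define S3 where "S3 = {i\<in>Om. U i > Q}"
  have PQ: "P \<le> Q" using yq_PQ(3)[OF kn] by (simp add: P_def Q_def)
  have nt: "U j \<noteq> P" "U j \<noteq> Q" if "j \<in> Om" for j
    using good_noties[OF kn U] that by (auto simp: P_def Q_def Om_def)
  have fO: "finite Om" by (simp add: Om_def yq_ord_def)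
  have u: "Om = S1 \<union> S2 \<union> S3"
  proof (intro equalityI subsetI)
    fix j assume j: "j \<in> Om"
    then show "j \<in> S1 \<union> S2 \<union> S3" using nt[OF j] by (auto simp: S1_def S2_def S3_def)
  qed (auto simp: S1_def S2_def S3_def)
  have "card Om = card (S1 \<union> S2) + card S3"
    unfolding u using PQ fO by (intro card_Un_disjoint) (auto simp: S1_def S2_def S3_def)
  also have "card (S1 \<union> S2) = card S1 + card S2"
    using PQ fO by (intro card_Un_disjoint) (auto simp: S1_def S2_def)
  finally have "card Om = card S1 + card S2 + card S3" .
  moreover have "card Om = n - (t1 + t2 + t3 + 2)" using kn by (simp add: Om_def yq_ord_def)
  ultimately show ?thesis
    by (simp add: yq_I_def Let_def S1_def S2_def S3_def P_def Q_def Om_def)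
qed

lemma good_TS:
  assumes kn: "t1 + t2 + t3 + 2 \<le> n" and U: "U \<in> space (unif_input n)" "U \<notin> Tie n"
    and I: "yq_I t1 t2 t3 n U = (i1, i2, i3)" and s: "i1 + i2 + i3 = n - (t1 + t2 + t3 + 2)"
  shows "yq_TS t1 t2 t3 n U = i1 + card (LsetF t1 t2 t3 n U \<inter> {t1 + t2 + 2..<t1 + t2 + 2 + (i1 + i2)})
            + of_bool (t1 + t2 + 2 + (i1 + i2) \<in> LsetF t1 t2 t3 n U)"
proof -
  define lo where "lo = t1 + t2 + 2"
  define hi where "hi = n - t3 - 1"
  define Q where "Q = yq_Q t1 t2 t3 n U"
  define Ls where "Ls = LsetF t1 t2 t3 n U"
  define c where "c = lo + (i1 + i2)"
  have Ls: "Ls = {j\<in>{lo..hi}. Q < U j}" by (simp add: Ls_def LsetF_def yq_ord_def lo_def hi_def Q_def)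
  have i3: "card Ls = i3" using I by (simp add: Ls_def LsetF_def yq_I_def Let_def Q_def)
  have c': "n - t3 - card {j\<in>yq_ord t1 t2 t3 n. yq_Q t1 t2 t3 n U < U j} = c"
    using i3 s kn unfolding Ls_def LsetF_def c_def lo_def by simp
  have chi: "c \<le> hi + 1" using s kn by (simp add: c_def lo_def hi_def)
  have K: "yq_K t1 t2 t3 n U = {lo..< c + (if c \<le> hi \<and> Q < U c then 1 else 0)}"
    using good_main(1)[OF kn U] unfolding c' by (simp add: lo_def hi_def Q_def)
  have TS: "yq_TS t1 t2 t3 n U = i1 + card {j\<in>yq_K t1 t2 t3 n U. Q < U j}"
    using good_main(2)[OF kn U] I by (simp add: yq_lK_def Q_def)
  have base: "{j\<in>{lo..<c}. Q < U j} = Ls \<inter> {lo..<c}" using chi unfolding Ls by auto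
  show ?thesis
  proof (cases "c \<le> hi \<and> Q < U c")
    case True
    then have cin: "c \<in> Ls" unfolding Ls using c_def by auto
    have "{j\<in>yq_K t1 t2 t3 n U. Q < U j} = insert c {j\<in>{lo..<c}. Q < U j}"
      unfolding K using True by (auto simp: c_def)
    then have "card {j\<in>yq_K t1 t2 t3 n U. Q < U j} = Suc (card (Ls \<inter> {lo..<c}))"
      unfolding base by simp
    then show ?thesis using TS cin by (simp add: Ls_def c_def lo_def)
  next
    case False
    then have cin: "c \<notin> Ls" unfolding Ls by auto
    have z: "(if c \<le> hi \<and> Q < U c then 1 else 0) = (0::nat)" using False by (rule if_not_P)
    have "{j\<in>yq_K t1 t2 t3 n U. Q < U j} = {j\<in>{lo..<c}. Q < U j}"
      unfolding K z by simp
    then show ?thesis using TS cin base by (simp add: Ls_def c_def lo_def)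
  qed
qed

lemma prob_unif: "prob_space (unif_input n)"
  unfolding unif_input_def by (rule prob_space_PiM) (rule prob_unifM)

lemma second_conj:
  assumes kn: "t1 + t2 + t3 + 2 \<le> n"
  shows "\<exists>p :: (nat \<times> bool) pmf.
            map_pmf fst p = hypg_pmf (i1 + i2) i3 (n - (t1 + t2 + t3 + 2))
          \<and> map_pmf snd p = bernoulli_pmf (real i3 / real (n - (t1 + t2 + t3 + 2)))
          \<and> (\<forall>m. measure (unif_input n)
                    {U \<in> space (unif_input n). yq_I t1 t2 t3 n U = (i1, i2, i3) \<and> yq_TS t1 t2 t3 n U = m}
                 = measure (unif_input n) {U \<in> space (unif_input n). yq_I t1 t2 t3 n U = (i1, i2, i3)}
                   * pmf (map_pmf (\<lambda>(x, b). i1 + x + of_bool b) p) m)"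
proof -
  define M where "M = unif_input n"
  define i where "i = (i1, i2, i3)"
  define N where "N = n - (t1 + t2 + t3 + 2)"
  define lo where "lo = t1 + t2 + 2"
  define hi where "hi = n - t3 - 1"
  have NN: "N = hi + 1 - lo" and lh: "lo \<le> hi + 1" using kn by (simp_all add: N_def lo_def hi_def)
  define Si where "Si = {U \<in> space M. yq_I t1 t2 t3 n U = i}"
  define Sim where "Sim m = {U \<in> space M. yq_I t1 t2 t3 n U = i \<and> yq_TS t1 t2 t3 n U = m}" for m
  have Si_meas: "Si \<in> sets M"
    using yq_measurable[OF kn, of "{i} \<times> UNIV \<times> UNIV"] by (simp add: Si_def M_def)
  have Sim_meas: "Sim m \<in> sets M" for m
    using yq_measurable[OF kn, of "{i} \<times> UNIV \<times> {m}"] by (simp add: Sim_def M_def)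
  show ?thesis
  proof (cases "i1 + i2 + i3 = N")
    case False
    have "Si \<subseteq> Tie n"
    proof
      fix U assume U: "U \<in> Si"
      show "U \<in> Tie n"
      proof (rule ccontr)
        assume nt: "U \<notin> Tie n"
        have sp: "U \<in> space (unif_input n)" "yq_I t1 t2 t3 n U = i" using U by (auto simp: Si_def M_def)
        have "fst (yq_I t1 t2 t3 n U) + fst (snd (yq_I t1 t2 t3 n U)) + snd (snd (yq_I t1 t2 t3 n U)) = N"
          using good_sumN[OF kn sp(1) nt] by (simp add: N_def)
        then show False using sp(2) False by (simp add: i_def)
      qed
    qed
    then have Sin: "Si \<in> null_sets M" using null_sets_subset[OF Tie_null Si_meas[unfolded M_def]] by (simp add: M_def)
    have Simn: "Sim m \<in> null_sets M" for m
      using null_sets_subset[OF Sin Sim_meas] by (auto simp: Sim_def Si_def)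
    show ?thesis
      apply (rule exI[of _ "pair_pmf (hypg_pmf (i1 + i2) i3 N) (bernoulli_pmf (real i3 / real N))"])
      using measure_eq_0_null_sets[OF Sin] measure_eq_0_null_sets[OF Simn]
      by (simp add: map_fst_pair_pmf map_snd_pair_pmf Si_def Sim_def M_def i_def N_def)
  next
    case True
    define a where "a = i1 + i2"
    define r where "r = i3"
    have ar: "a + r = hi + 1 - lo" using True NN by (simp add: a_def r_def)
    define p where "p = pL lo hi a r"
    define \<L> where "\<L> = Lfam lo hi r"
    define g where "g L = i1 + card (L \<inter> {lo..<lo + a}) + of_bool (lo + a \<in> L)" for L
    have ne: "\<L> \<noteq> {}" using lh ar by (simp add: \<L>_def Lfam_ne)
    have fin: "finite \<L>" by (simp add: \<L>_def Lfam_fin)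
    have cpos: "0 < card \<L>" using ne fin by (simp add: card_gt_0_iff)
    have ordeq: "yq_ord t1 t2 t3 n = {lo..hi}" by (simp add: yq_ord_def lo_def hi_def)
    have Lin: "LsetF t1 t2 t3 n U \<in> \<L>" if "U \<in> Si" for U
    proof -
      have "card (LsetF t1 t2 t3 n U) = i3" using that
        by (simp add: Si_def i_def LsetF_def yq_I_def Let_def)
      then show ?thesis by (auto simp: \<L>_def Lfam_def LsetF_def ordeq r_def)
    qed
    have ELm: "EL t1 t2 t3 n i L \<in> sets M" for L using EL_meas[OF kn] by (simp add: M_def)
    define F where "F m L = {U \<in> space M. yq_I t1 t2 t3 n U = i \<and> LsetF t1 t2 t3 n U = L \<and> yq_TS t1 t2 t3 n U = m}" for m L
    have Fm: "F m L \<in> sets M" for m L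
      using yq_measurable[OF kn, of "{i} \<times> {L} \<times> {m}"] by (simp add: F_def M_def)
    interpret P: prob_space M unfolding M_def by (rule prob_unif)
    have Si_eq: "Si = (\<Union>L\<in>\<L>. EL t1 t2 t3 n i L)"
      using Lin by (auto simp: Si_def EL_def M_def)
    have Sim_eq: "Sim m = (\<Union>L\<in>\<L>. F m L)" for m
      using Lin by (auto simp: Sim_def Si_def F_def)
    have mSi: "measure M Si = (\<Sum>L\<in>\<L>. measure M (EL t1 t2 t3 n i L))"
      unfolding Si_eq
      by (rule P.finite_measure_finite_Union[OF fin]) (use ELm in \<open>auto simp: disjoint_family_on_def EL_def\<close>)
    have mSim: "measure M (Sim m) = (\<Sum>L\<in>\<L>. measure M (F m L))" for m
      unfolding Sim_eq
      by (rule P.finite_measure_finite_Union[OF fin]) (use Fm in \<open>auto simp: disjoint_family_on_def F_def\<close>)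
    have mF: "measure M (F m L) = (if g L = m then measure M (EL t1 t2 t3 n i L) else 0)" if L: "L \<in> \<L>" for m L
    proof -
      have ae: "AE U in M. U \<in> F m L \<longleftrightarrow> U \<in> (if g L = m then EL t1 t2 t3 n i L else {})"
      proof (rule AE_I'[OF Tie_null[of n, folded M_def]], rule subsetI)
        fix U assume U: "U \<in> {U \<in> space M. \<not> (U \<in> F m L \<longleftrightarrow> U \<in> (if g L = m then EL t1 t2 t3 n i L else {}))}"
        show "U \<in> Tie n"
        proof (rule ccontr)
          assume nt: "U \<notin> Tie n"
          have sp: "U \<in> space (unif_input n)" using U by (simp add: M_def)
          show False
          proof (cases "yq_I t1 t2 t3 n U = i \<and> LsetF t1 t2 t3 n U = L")
            case True
            have "yq_TS t1 t2 t3 n U = g L"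
              using good_TS[OF kn sp nt, of i1 i2 i3] True \<open>i1 + i2 + i3 = N\<close>
              by (simp add: i_def N_def g_def lo_def a_def)
            then show False using U True by (auto simp: F_def EL_def M_def split: if_splits)
          next
            case False
            then show False using U by (auto simp: F_def EL_def M_def split: if_splits)
          qed
        qed
      qed
      have "measure M (F m L) = measure M (if g L = m then EL t1 t2 t3 n i L else {})"
        by (rule measure_eq_AE[OF ae Fm]) (simp add: ELm)
      then show ?thesis by simp
    qed
    obtain L0 where L0: "L0 \<in> \<L>" using ne by auto
    define c0 where "c0 = measure M (EL t1 t2 t3 n i L0)"
    have ELc: "measure M (EL t1 t2 t3 n i L) = c0" if "L \<in> \<L>" for L
      unfolding c0_def M_def
      by (rule EL_sym[OF kn]) (use that L0 in \<open>auto simp: \<L>_def Lfam_def ordeq\<close>)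
    have mSi': "measure M Si = real (card \<L>) * c0" unfolding mSi using ELc by simp
    have mSim': "measure M (Sim m) = real (card {L\<in>\<L>. g L = m}) * c0" for m
    proof -
      have "measure M (Sim m) = (\<Sum>L\<in>\<L>. if g L = m then c0 else 0)"
        unfolding mSim using mF ELc by (intro sum.cong) auto
      also have "\<dots> = (\<Sum>L\<in>{L\<in>\<L>. g L = m}. c0)" by (rule sum.inter_filter[OF fin, symmetric])
      finally show ?thesis by simp
    qed
    have pv: "pmf (map_pmf (\<lambda>(x, b). i1 + x + of_bool b) p) m = real (card {L\<in>\<L>. g L = m}) / real (card \<L>)" for m
      using pL_val[OF lh ar, of i1 m] by (simp add: p_def \<L>_def g_def)
    have NN2: "n - (t1 + t2 + t3 + 2) = hi + 1 - lo" using kn by (simp add: lo_def hi_def)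
    show ?thesis
    proof (rule exI[of _ p], intro conjI allI)
      show "map_pmf fst p = hypg_pmf (i1 + i2) i3 (n - (t1 + t2 + t3 + 2))"
        unfolding NN2 p_def using pL_fst[OF lh ar] by (simp add: a_def r_def)
      show "map_pmf snd p = bernoulli_pmf (real i3 / real (n - (t1 + t2 + t3 + 2)))"
        unfolding NN2 p_def using pL_snd[OF lh ar] by (simp add: a_def r_def)
      fix m
      have "measure M (Sim m) = measure M Si * pmf (map_pmf (\<lambda>(x, b). i1 + x + of_bool b) p) m"
        unfolding mSim' mSi' pv using cpos by (simp add: field_simps)
      then show "measure (unif_input n) {U \<in> space (unif_input n). yq_I t1 t2 t3 n U = (i1, i2, i3) \<and> yq_TS t1 t2 t3 n U = m}
                 = measure (unif_input n) {U \<in> space (unif_input n). yq_I t1 t2 t3 n U = (i1, i2, i3)}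
                   * pmf (map_pmf (\<lambda>(x, b). i1 + x + of_bool b) p) m"
        by (simp add: Sim_def Si_def M_def i_def)
    qed
  qed
qed


theorem lemma5p2:
  fixes t1 t2 t3 w n :: nat
  assumes "w \<ge> t1 + t2 + t3 + 2 - 1"
    and "n > w"
  shows "(AE U in unif_input n.
            yq_TS t1 t2 t3 n U = fst (yq_I t1 t2 t3 n U) + yq_lK t1 t2 t3 n U)
       \<and> (\<forall>i1 i2 i3. \<exists>p :: (nat \<times> bool) pmf.
            map_pmf fst p = hypg_pmf (i1 + i2) i3 (n - (t1 + t2 + t3 + 2))
          \<and> map_pmf snd p = bernoulli_pmf (real i3 / real (n - (t1 + t2 + t3 + 2)))
          \<and> (\<forall>m. measure (unif_input n)
                    {U \<in> space (unif_input n). yq_I t1 t2 t3 n U = (i1, i2, i3) \<and> yq_TS t1 t2 t3 n U = m}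
                 = measure (unif_input n) {U \<in> space (unif_input n). yq_I t1 t2 t3 n U = (i1, i2, i3)}
                   * pmf (map_pmf (\<lambda>(x, b). i1 + x + of_bool b) p) m))"
proof -
  have kn: "t1 + t2 + t3 + 2 \<le> n" using assms by simp
  show ?thesis
  proof (intro conjI allI)
    show "AE U in unif_input n. yq_TS t1 t2 t3 n U = fst (yq_I t1 t2 t3 n U) + yq_lK t1 t2 t3 n U"
      by (rule first_conj[OF kn])
    fix i1 i2 i3
    show "\<exists>p :: (nat \<times> bool) pmf.
            map_pmf fst p = hypg_pmf (i1 + i2) i3 (n - (t1 + t2 + t3 + 2))
          \<and> map_pmf snd p = bernoulli_pmf (real i3 / real (n - (t1 + t2 + t3 + 2)))
          \<and> (\<forall>m. measure (unif_input n)
                    {U \<in> space (unif_input n). yq_I t1 t2 t3 n U = (i1, i2, i3) \<and> yq_TS t1 t2 t3 n U = m}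
                 = measure (unif_input n) {U \<in> space (unif_input n). yq_I t1 t2 t3 n U = (i1, i2, i3)}
                   * pmf (map_pmf (\<lambda>(x, b). i1 + x + of_bool b) p) m)"
      by (rule second_conj[OF kn])
  qed
qed

end
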